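(* Let $p,q\ge0$, $n=p+q\ge1$, $N=2^{\lfloor (n+1)/2\rfloor}$. Let $M\in\mathcal{G}^{\mathbb{C}}_{p,q}$ and $T:=M^\dagger M$. Then ${\rm rank}(M)=N$ if $C_{(N)}(M)\ne0$; for $k\in\{2,\dots,N-1\}$, ${\rm rank}(M)=k$ if $C_{(N)}(M)=0$, $C_{(j)}(T)=0$ for all $j=k+1,\dots,N-1$, and $C_{(k)}(T)\neq0$; ${\rm rank}(M)=1$ if $C_{(N)}(M)=0$, $C_{(j)}(T)=0$ for all $j=2,\dots,N-1$, and $M\ne0$; ${\rm rank}(M)=0$ if $M=0$.
   Context: Let $\mathcal{G}_{p,q}$ be the real Clifford algebra with identity $e$ and generators $e_1,\dots,e_n$ satisfying $e_ae_b+e_be_a=2\eta_{ab}e$, $\eta={\rm diag}(1,\dots,1,-1,\dots,-1)$ ($p$ ones, $q$ minus ones), basis elements $e_A=e_{a_1}\cdots e_{a_k}$ for $a_1<\dots<a_k$, and $\mathcal{G}^{\mathbb{C}}_{p,q}=\mathbb{C}\otimes\mathcal{G}_{p,q}$ with elements $M=\sum_A m_Ae_A$, $m_A\in\mathbb{C}$. Hermitian conjugation: $M^\dagger=\sum_A\overline{m_A}(e_A)^{-1}$. Let $\langle M\rangle_0$ denote the coefficient of $e$. Let $\beta$ be an algebra isomorphism from $\mathcal{G}^{\mathbb{C}}_{p,q}$ onto ${\rm Mat}(N,\mathbb{C})$ if $n$ is even, and onto block-diagonal matrices ${\rm diag}(X,Y)$, $X,Y\in{\rm Mat}(N/2,\mathbb{C})$,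 if $n$ is odd. The rank is ${\rm rank}(M):={\rm rank}(\beta(M))$, independent of $\beta$. The characteristic polynomial coefficients $C_{(k)}(M)$ are defined by $\det(\lambda I_N-\beta(M))=\lambda^N-C_{(1)}(M)\lambda^{N-1}-\cdots-C_{(N)}(M)$ (independent of $\beta$); equivalently by the recursion $M_{(1)}=M$, $C_{(k)}=\frac{N}{k}\langle M_{(k)}\rangle_0$, $M_{(k+1)}=M(M_{(k)}-C_{(k)})$, $k=1,\dots,N$. *)

theory Defs
  imports "Jordan_Normal_Form.DL_Rank" "HOL-Library.Function_Algebras"
begin

text \<open>Elements of the complexified Clifford algebra G^C_{p,q} (n = p+q) are represented
  by their coefficient functions A \<mapsto> m_A, where the basis element e_A is indexed by a
  subset A of {0..<n} (generator e_{a+1} corresponds to index a).\<close>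

type_synonym cl = "nat set \<Rightarrow> complex"

definition clif :: "nat \<Rightarrow> cl set" where
  "clif n = {M. \<forall>A. M A \<noteq> 0 \<longrightarrow> A \<subseteq> {..<n}}"

definition eta :: "nat \<Rightarrow> nat \<Rightarrow> complex" where
  "eta p a = (if a < p then 1 else -1)"

text \<open>e_A e_B = basis_sign p A B * e_{A symmetric-difference B}.\<close>
definition basis_sign :: "nat \<Rightarrow> nat set \<Rightarrow> nat set \<Rightarrow> complex" where
  "basis_sign p A B = (-1) ^ card {(a, b). a \<in> A \<and> b \<in> B \<and> b < a} * (\<Prod>a\<in>A \<inter> B. eta p a)"

definition cl_basis :: "nat set \<Rightarrow> cl" where
  "cl_basis A = (\<lambda>C. if C = A then 1 else 0)"

definition cl_one :: cl where
  "cl_one = cl_basis {}"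

definition cl_mult :: "nat \<Rightarrow> nat \<Rightarrow> cl \<Rightarrow> cl \<Rightarrow> cl" where
  "cl_mult p q X Y = (\<lambda>C. \<Sum>A\<in>Pow {..<p+q}. \<Sum>B\<in>Pow {..<p+q}.
      if (A - B) \<union> (B - A) = C then X A * Y B * basis_sign p A B else 0)"

definition basis_inv :: "nat \<Rightarrow> nat \<Rightarrow> nat set \<Rightarrow> cl" where
  "basis_inv p q A = (THE X. X \<in> clif (p+q) \<and> cl_mult p q (cl_basis A) X = cl_one
                         \<and> cl_mult p q X (cl_basis A) = cl_one)"

definition cl_dagger :: "nat \<Rightarrow> nat \<Rightarrow> cl \<Rightarrow> cl" where
  "cl_dagger p q M = (\<lambda>C. \<Sum>A\<in>Pow {..<p+q}. cnj (M A) * basis_inv p q A C)"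

definition scalar_part :: "cl \<Rightarrow> complex" where
  "scalar_part M = M {}"

definition clif_N :: "nat \<Rightarrow> nat" where
  "clif_N n = 2 ^ ((n + 1) div 2)"

text \<open>Mseq p q N M k = M_(k+1) in the recursion
  M_(1) = M, C_(k) = N/k <M_(k)>_0, M_(k+1) = M (M_(k) - C_(k) e).\<close>
primrec Mseq :: "nat \<Rightarrow> nat \<Rightarrow> nat \<Rightarrow> cl \<Rightarrow> nat \<Rightarrow> cl" where
  "Mseq p q N M 0 = M"
| "Mseq p q N M (Suc k) = cl_mult p q M
     (\<lambda>A. Mseq p q N M k A - (of_nat N / of_nat (Suc k)) * scalar_part (Mseq p q N M k) * cl_one A)"

text \<open>Characteristic polynomial coefficient C_(k)(M), for k \<ge> 1.\<close>
definition char_coeff :: "nat \<Rightarrow> nat \<Rightarrow> cl \<Rightarrow> nat \<Rightarrow> complex" where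
  "char_coeff p q M k = of_nat (clif_N (p+q)) / of_nat k * scalar_part (Mseq p q (clif_N (p+q)) M (k - 1))"

definition beta_target :: "nat \<Rightarrow> complex mat set" where
  "beta_target n = (let N = clif_N n in
     if even n then carrier_mat N N
     else {A \<in> carrier_mat N N. \<forall>i<N. \<forall>j<N.
              ((i < N div 2) \<noteq> (j < N div 2)) \<longrightarrow> A $$ (i, j) = 0})"

definition is_beta :: "nat \<Rightarrow> nat \<Rightarrow> (cl \<Rightarrow> complex mat) \<Rightarrow> bool" where
  "is_beta p q \<beta> \<longleftrightarrow>
     bij_betw \<beta> (clif (p+q)) (beta_target (p+q)) \<and>
     (\<forall>X\<in>clif (p+q). \<forall>Y\<in>clif (p+q). \<beta> (X + Y) = \<beta> X + \<beta> Y) \<and>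
     (\<forall>c. \<forall>X\<in>clif (p+q). \<beta> (\<lambda>A. c * X A) = c \<cdot>\<^sub>m \<beta> X) \<and>
     (\<forall>X\<in>clif (p+q). \<forall>Y\<in>clif (p+q). \<beta> (cl_mult p q X Y) = \<beta> X * \<beta> Y) \<and>
     \<beta> cl_one = 1\<^sub>m (clif_N (p+q))"

definition cl_rank :: "nat \<Rightarrow> nat \<Rightarrow> (cl \<Rightarrow> complex mat) \<Rightarrow> cl \<Rightarrow> nat" where
  "cl_rank p q \<beta> M = vec_space.rank (clif_N (p+q)) (\<beta> M)"

end

theory Submission
  imports Defs "Jordan_Normal_Form.Jordan_Normal_Form_Uniqueness" "Jordan_Normal_Form.Jordan_Normal_Form_Existence" "Jordan_Normal_Form.Schur_Decomposition"
begin

lemma cl_basis_clif: "A \<subseteq> {..<n} \<Longrightarrow> cl_basis A \<in> clif n"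
  unfolding clif_def cl_basis_def by auto

lemma cl_one_clif: "cl_one \<in> clif n"
  unfolding cl_one_def by (rule cl_basis_clif) auto

lemma clif_add: assumes "X \<in> clif n" "Y \<in> clif n" shows "X + Y \<in> clif n"
  unfolding clif_def
proof (intro CollectI allI impI)
  fix A assume "(X + Y) A \<noteq> 0"
  then have "X A \<noteq> 0 \<or> Y A \<noteq> 0" by auto
  then show "A \<subseteq> {..<n}" using assms unfolding clif_def by blast
qed

lemma sum_fun_apply: "(sum f S) x = (\<Sum>i\<in>S. f i x)"
  by (induct S rule: infinite_finite_induct) auto

lemma clif_smult: "X \<in> clif n \<Longrightarrow> (\<lambda>A. c * X A) \<in> clif n"
  unfolding clif_def by auto

lemma clif_zero: "0 \<in> clif n"
  unfolding clif_def by auto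

lemma clif_sum: "finite S \<Longrightarrow> (\<And>i. i \<in> S \<Longrightarrow> f i \<in> clif n) \<Longrightarrow> sum f S \<in> clif n"
  by (induct S rule: finite_induct) (auto intro: clif_add clif_zero)

lemma cl_mult_clif: "cl_mult p q X Y \<in> clif (p+q)"
  unfolding clif_def cl_mult_def
proof (intro CollectI allI impI)
  fix C assume "(\<Sum>A\<in>Pow {..<p + q}. \<Sum>B\<in>Pow {..<p + q}.
            if A - B \<union> (B - A) = C then X A * Y B * basis_sign p A B else 0) \<noteq> 0"
  then obtain A where A: "A \<in> Pow {..<p+q}" and S:
    "(\<Sum>B\<in>Pow {..<p + q}. if A - B \<union> (B - A) = C then X A * Y B * basis_sign p A B else 0) \<noteq> 0"
    by (rule sum.not_neutral_contains_not_neutral)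
  from S obtain B where B: "B \<in> Pow {..<p+q}" and
    "(if A - B \<union> (B - A) = C then X A * Y B * basis_sign p A B else 0) \<noteq> 0"
    by (rule sum.not_neutral_contains_not_neutral)
  then have "A - B \<union> (B - A) = C" by presburger
  with A B show "C \<subseteq> {..<p+q}" by auto
qed

lemma cl_mult_basis:
  assumes "A \<subseteq> {..<p+q}" "B \<subseteq> {..<p+q}"
  shows "cl_mult p q (cl_basis A) (cl_basis B) = (\<lambda>C. basis_sign p A B * cl_basis (A - B \<union> (B - A)) C)"
proof
  fix C
  have e: "(if A' - B' \<union> (B' - A') = C then cl_basis A A' * cl_basis B B' * basis_sign p A' B' else 0)
     = (if A' = A then (if B' = B then (if A - B \<union> (B - A) = C then basis_sign p A B else 0) else 0) else 0)"
    for A' B' by (auto simp: cl_basis_def)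
  have "cl_mult p q (cl_basis A) (cl_basis B) C =
     (\<Sum>A'\<in>Pow {..<p + q}. if A' = A then (\<Sum>B'\<in>Pow {..<p + q}. if B' = B then
        (if A - B \<union> (B - A) = C then basis_sign p A B else 0) else 0) else 0)"
    unfolding cl_mult_def e by (intro sum.cong refl) auto
  also have "\<dots> = (if A - B \<union> (B - A) = C then basis_sign p A B else 0)"
    using assms by (simp add: sum.delta)
  finally show "cl_mult p q (cl_basis A) (cl_basis B) C = basis_sign p A B * cl_basis (A - B \<union> (B - A)) C"
    unfolding cl_basis_def by auto
qed

lemma clif_expand:
  assumes "X \<in> clif n"
  shows "X = (\<Sum>A\<in>Pow {..<n}. (\<lambda>C. X A * cl_basis A C))"
proof
  fix C
  have "(\<Sum>A\<in>Pow {..<n}. (\<lambda>C. X A * cl_basis A C)) C = (\<Sum>A\<in>Pow {..<n}. X A * cl_basis A C)"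
    by (simp add: sum_fun_apply)
  also have "\<dots> = (\<Sum>A\<in>Pow {..<n}. if A = C then X C else 0)"
    unfolding cl_basis_def by (intro sum.cong) auto
  also have "\<dots> = X C" using assms unfolding clif_def by auto
  finally show "X C = (\<Sum>A\<in>Pow {..<n}. (\<lambda>C. X A * cl_basis A C)) C" by simp
qed

lemma eta_sq: "eta p a * eta p a = 1" unfolding eta_def by auto

lemma cnj_eta: "cnj (eta p a) = eta p a" unfolding eta_def by auto

lemma prod_eta_sq: "(\<Prod>a\<in>S. eta p a) * (\<Prod>a\<in>S. eta p a) = 1"
  by (simp add: prod.distrib[symmetric] eta_sq)

lemma m1_pow_sq: "((-1::complex)^k) * (-1)^k = 1"
  by (induct k) auto

lemma basis_sign_sq: "basis_sign p A B * basis_sign p A B = 1"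
proof -
  have "basis_sign p A B * basis_sign p A B = ((-1)^ card {(a, b). a \<in> A \<and> b \<in> B \<and> b < a} * (-1)^ card {(a, b). a \<in> A \<and> b \<in> B \<and> b < a})
     * ((\<Prod>a\<in>A \<inter> B. eta p a) * (\<Prod>a\<in>A \<inter> B. eta p a))"
    unfolding basis_sign_def by (simp add: algebra_simps)
  also have "\<dots> = 1" by (simp only: prod_eta_sq m1_pow_sq) simp
  finally show ?thesis .
qed

lemma cnj_basis_sign: "cnj (basis_sign p A B) = basis_sign p A B"
proof -
  have "cnj (\<Prod>a\<in>A \<inter> B. eta p a) = (\<Prod>a\<in>A \<inter> B. eta p a)"
    by (simp add: cnj_eta)
  then show ?thesis unfolding basis_sign_def by simp
qed

lemma basis_sign_nz: "basis_sign p A B \<noteq> 0"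
  using basis_sign_sq[of p A B] by auto

lemma basis_sign_empty: "basis_sign p {} B = 1" "basis_sign p A {} = 1"
  unfolding basis_sign_def by auto

lemma cl_mult_smult_right: "cl_mult p q X (\<lambda>C. c * Y C) = (\<lambda>C. c * cl_mult p q X Y C)"
  unfolding cl_mult_def by (auto simp: sum_distrib_left intro!: sum.cong)

lemma cl_mult_smult_left: "cl_mult p q (\<lambda>C. c * X C) Y = (\<lambda>C. c * cl_mult p q X Y C)"
  unfolding cl_mult_def by (auto simp: sum_distrib_left intro!: sum.cong)

locale cb =
  fixes p q :: nat and \<beta> :: "cl \<Rightarrow> complex mat"
  assumes beta: "is_beta p q \<beta>" and n1: "p + q \<ge> 1"
begin

abbreviation "n \<equiv> p + q"
abbreviation "NN \<equiv> clif_N (p+q)"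
abbreviation "cm \<equiv> cl_mult p q"
abbreviation "e \<equiv> cl_basis"
abbreviation "sg \<equiv> basis_sign p"
abbreviation "sd A B \<equiv> A - B \<union> (B - A)"

lemma beta_target_carrier: "beta_target n \<subseteq> carrier_mat NN NN"
  unfolding beta_target_def Let_def by auto

lemma b_target: "X \<in> clif n \<Longrightarrow> \<beta> X \<in> beta_target n"
  using beta unfolding is_beta_def bij_betw_def by auto

lemma b_carrier: "X \<in> clif n \<Longrightarrow> \<beta> X \<in> carrier_mat NN NN"
  using b_target beta_target_carrier by auto

lemma b_add: "X \<in> clif n \<Longrightarrow> Y \<in> clif n \<Longrightarrow> \<beta> (X + Y) = \<beta> X + \<beta> Y"
  using beta unfolding is_beta_def by auto

lemma b_smult: "X \<in> clif n \<Longrightarrow> \<beta> (\<lambda>A. c * X A) = c \<cdot>\<^sub>m \<beta> X"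
  using beta unfolding is_beta_def by auto

lemma b_mult: "X \<in> clif n \<Longrightarrow> Y \<in> clif n \<Longrightarrow> \<beta> (cm X Y) = \<beta> X * \<beta> Y"
  using beta unfolding is_beta_def by auto

lemma b_one: "\<beta> cl_one = 1\<^sub>m NN"
  using beta unfolding is_beta_def by auto

lemma b_inj: "X \<in> clif n \<Longrightarrow> Y \<in> clif n \<Longrightarrow> \<beta> X = \<beta> Y \<Longrightarrow> X = Y"
  using beta unfolding is_beta_def bij_betw_def inj_on_def by auto

lemma b_surj: "U \<in> beta_target n \<Longrightarrow> \<exists>X\<in>clif n. \<beta> X = U"
  using beta unfolding is_beta_def bij_betw_def by (metis (no_types, lifting) imageE)

lemma b_zero: "\<beta> 0 = 0\<^sub>m NN NN"
proof -
  have "(0::cl) = (\<lambda>A. 0 * cl_one A)" by auto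
  then have "\<beta> 0 = 0 \<cdot>\<^sub>m \<beta> cl_one" using b_smult[OF cl_one_clif] by metis
  then show ?thesis using b_one by auto
qed

lemma b_sub_one: assumes "X \<in> clif n"
  shows "(\<lambda>A. X A - c * cl_one A) \<in> clif n" "\<beta> (\<lambda>A. X A - c * cl_one A) = \<beta> X - c \<cdot>\<^sub>m 1\<^sub>m NN"
proof -
  have eq: "(\<lambda>A. X A - c * cl_one A) = X + (\<lambda>A. (-c) * cl_one A)" by auto
  show "(\<lambda>A. X A - c * cl_one A) \<in> clif n" unfolding eq
    by (intro clif_add clif_smult assms cl_one_clif)
  have "\<beta> (\<lambda>A. X A - c * cl_one A) = \<beta> X + \<beta> (\<lambda>A. (-c) * cl_one A)"
    unfolding eq by (rule b_add[OF assms clif_smult[OF cl_one_clif]])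
  also have "\<beta> (\<lambda>A. (-c) * cl_one A) = (-c) \<cdot>\<^sub>m 1\<^sub>m NN"
    by (simp only: b_smult[OF cl_one_clif] b_one)
  finally have "\<beta> (\<lambda>A. X A - c * cl_one A) = \<beta> X + (-c) \<cdot>\<^sub>m 1\<^sub>m NN" .
  also have "\<dots> = \<beta> X - c \<cdot>\<^sub>m 1\<^sub>m NN"
    using b_carrier[OF assms] by (intro eq_matI) auto
  finally show "\<beta> (\<lambda>A. X A - c * cl_one A) = \<beta> X - c \<cdot>\<^sub>m 1\<^sub>m NN" .
qed

lemma cl_assoc: assumes "X \<in> clif n" "Y \<in> clif n" "Z \<in> clif n"
  shows "cm (cm X Y) Z = cm X (cm Y Z)"
proof (rule b_inj)
  show "cm (cm X Y) Z \<in> clif n" "cm X (cm Y Z) \<in> clif n" by (rule cl_mult_clif)+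
  have "\<beta> (cm (cm X Y) Z) = \<beta> X * \<beta> Y * \<beta> Z"
    using assms by (simp add: b_mult cl_mult_clif)
  also have "\<dots> = \<beta> X * (\<beta> Y * \<beta> Z)"
    using assms b_carrier by (intro assoc_mult_mat[of _ NN NN _ NN _ NN]) auto
  also have "\<dots> = \<beta> (cm X (cm Y Z))"
    using assms by (simp add: b_mult cl_mult_clif)
  finally show "\<beta> (cm (cm X Y) Z) = \<beta> (cm X (cm Y Z))" .
qed

lemma cl_one_left: "X \<in> clif n \<Longrightarrow> cm cl_one X = X"
  by (rule b_inj) (auto simp: cl_mult_clif b_mult cl_one_clif b_one left_mult_one_mat[OF b_carrier])

lemma cl_one_right: "X \<in> clif n \<Longrightarrow> cm X cl_one = X"
  by (rule b_inj) (auto simp: cl_mult_clif b_mult cl_one_clif b_one right_mult_one_mat[OF b_carrier])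

lemma sd_self: "sd A A = {}" by auto
lemma sd_cancel: "sd A (sd A B) = B" by auto

lemma sign_assoc: assumes A: "A \<subseteq> {..<n}" and B: "B \<subseteq> {..<n}"
  shows "sg A B = sg A A * sg A (sd A B)"
proof -
  have AB: "sd A B \<subseteq> {..<n}" using A B by auto
  have "cm (e A) (cm (e A) (e B)) = cm (cm (e A) (e A)) (e B)"
    using A B by (simp add: cl_assoc cl_basis_clif)
  also have "cm (e A) (e A) = (\<lambda>C. sg A A * e {} C)"
    using cl_mult_basis[OF A A] by (simp add: sd_self)
  also have "cm (\<lambda>C. sg A A * e {} C) (e B) = (\<lambda>C. sg A A * e B C)"
    using cl_mult_basis[of "{}" p q B] B by (simp add: cl_mult_smult_left basis_sign_empty)
  also have "cm (e A) (cm (e A) (e B)) = (\<lambda>C. sg A B * sg A (sd A B) * e B C)"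
    using cl_mult_basis[OF A B] cl_mult_basis[OF A AB] by (simp add: cl_mult_smult_right sd_cancel mult.assoc)
  finally have "(\<lambda>C. sg A B * sg A (sd A B) * e B C) = (\<lambda>C. sg A A * e B C)" .
  then have "sg A B * sg A (sd A B) * e B B = sg A A * e B B" by metis
  then have "sg A B * sg A (sd A B) = sg A A" by (simp add: cl_basis_def)
  then have "sg A B * sg A (sd A B) * sg A (sd A B) = sg A A * sg A (sd A B)" by simp
  then show ?thesis by (simp add: basis_sign_sq mult.assoc)
qed

lemma basis_inv_eq: assumes A: "A \<subseteq> {..<n}"
  shows "basis_inv p q A = (\<lambda>C. sg A A * e A C)"
  unfolding basis_inv_def
proof (rule the_equality)
  let ?Y = "(\<lambda>C. sg A A * e A C)"
  have Y: "?Y \<in> clif n" by (intro clif_smult cl_basis_clif A)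
  have 1: "cm (e A) ?Y = cl_one"
    by (simp add: cl_mult_smult_right cl_mult_basis[OF A A] sd_self cl_one_def
        mult.assoc[symmetric] basis_sign_sq)
  have 2: "cm ?Y (e A) = cl_one"
    by (simp add: cl_mult_smult_left cl_mult_basis[OF A A] sd_self cl_one_def
        mult.assoc[symmetric] basis_sign_sq)
  show "?Y \<in> clif n \<and> cm (e A) ?Y = cl_one \<and> cm ?Y (e A) = cl_one" using Y 1 2 by blast
  fix X assume X: "X \<in> clif n \<and> cm (e A) X = cl_one \<and> cm X (e A) = cl_one"
  have "X = cm (cm ?Y (e A)) X" using X 2 cl_one_left by simp
  also have "\<dots> = cm ?Y (cm (e A) X)" using X Y A by (simp add: cl_assoc cl_basis_clif)
  also have "\<dots> = ?Y" using X cl_one_right Y by simp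
  finally show "X = ?Y" .
qed

lemma dagger_eq: "cl_dagger p q M = (\<lambda>C. if C \<subseteq> {..<n} then cnj (M C) * sg C C else 0)"
proof
  fix C
  have "cl_dagger p q M C = (\<Sum>A\<in>Pow {..<n}. if A = C then cnj (M C) * sg C C else 0)"
    unfolding cl_dagger_def by (intro sum.cong refl) (auto simp: basis_inv_eq cl_basis_def)
  then show "cl_dagger p q M C = (if C \<subseteq> {..<n} then cnj (M C) * sg C C else 0)"
    by simp
qed

lemma dagger_clif: "cl_dagger p q M \<in> clif n"
  unfolding dagger_eq clif_def by auto

end

context cb begin

definition ip :: "cl \<Rightarrow> cl \<Rightarrow> complex" where
  "ip X Y = (\<Sum>A\<in>Pow {..<n}. cnj (X A) * Y A)"

lemma sd_eq_iff: "(sd A D = B) \<longleftrightarrow> (D = sd A B)" by auto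

lemma sd_Pow: "A \<in> Pow {..<n} \<Longrightarrow> B \<in> Pow {..<n} \<Longrightarrow> sd A B \<in> Pow {..<n}" by auto

lemma adjoint: "ip (cm M X) Y = ip X (cm (cl_dagger p q M) Y)"
proof -
  let ?P = "Pow {..<n}"
  have "ip (cm M X) Y = (\<Sum>C\<in>?P. \<Sum>A\<in>?P. \<Sum>B\<in>?P.
      if sd A B = C then cnj (M A) * cnj (X B) * sg A B * Y C else 0)"
    unfolding ip_def cl_mult_def
    by (simp add: sum_distrib_right cnj_basis_sign if_distrib if_distribR cong: if_cong)
  also have "\<dots> = (\<Sum>A\<in>?P. \<Sum>B\<in>?P. \<Sum>C\<in>?P.
      if sd A B = C then cnj (M A) * cnj (X B) * sg A B * Y C else 0)"
    by (subst sum.swap, subst (2) sum.swap, rule refl)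
  also have "\<dots> = (\<Sum>A\<in>?P. \<Sum>B\<in>?P. cnj (M A) * cnj (X B) * sg A B * Y (sd A B))"
    by (intro sum.cong refl) (auto simp: sum.delta)
  also have "\<dots> = (\<Sum>A\<in>?P. \<Sum>B\<in>?P. cnj (X B) * (cnj (M A) * sg A A) * Y (sd A B) * sg A (sd A B))"
  proof (intro sum.cong refl)
    fix A B assume "A \<in> ?P" "B \<in> ?P"
    then have "sg A B = sg A A * sg A (sd A B)" by (intro sign_assoc) auto
    then show "cnj (M A) * cnj (X B) * sg A B * Y (sd A B) =
          cnj (X B) * (cnj (M A) * sg A A) * Y (sd A B) * sg A (sd A B)" by simp
  qed
  also have "\<dots> = (\<Sum>B\<in>?P. \<Sum>A\<in>?P. \<Sum>D\<in>?P.
      if sd A D = B then cnj (X B) * (cl_dagger p q M A * Y D * sg A D) else 0)"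
    by (subst sum.swap, intro sum.cong refl)
       (auto simp: sd_eq_iff sum.delta dagger_eq cong: if_cong)
  also have "\<dots> = ip X (cm (cl_dagger p q M) Y)"
    unfolding ip_def cl_mult_def
    by (simp add: sum_distrib_left if_distrib if_distribR cong: if_cong)
  finally show ?thesis .
qed

lemma ip_smult_right: "ip X (\<lambda>C. c * Y C) = c * ip X Y"
  unfolding ip_def by (simp add: sum_distrib_left algebra_simps)

lemma ip_zero_left: "ip 0 Y = 0"
  unfolding ip_def by simp

lemma ip_cnj: "ip Y X = cnj (ip X Y)"
  unfolding ip_def by (simp add: mult.commute)

lemma ip_pos: "0 \<le> ip X X"
  unfolding ip_def
proof (rule sum_nonneg)
  fix A
  have "cnj (X A) * X A = complex_of_real ((cmod (X A))\<^sup>2)"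
    using complex_norm_square[of "X A"] by (simp add: mult.commute)
  then show "0 \<le> cnj (X A) * X A" by (simp add: less_eq_complex_def)
qed

lemma ip_eq0: assumes X: "X \<in> clif n" and "ip X X = 0" shows "X = 0"
proof
  fix A
  have nn: "\<And>A. 0 \<le> cnj (X A) * X A"
  proof -
    fix A
    have "cnj (X A) * X A = complex_of_real ((cmod (X A))\<^sup>2)"
      using complex_norm_square[of "X A"] by (simp add: mult.commute)
    then show "0 \<le> cnj (X A) * X A" by (simp add: less_eq_complex_def)
  qed
  show "X A = 0 A"
  proof (cases "A \<in> Pow {..<n}")
    case True
    from assms(2)[unfolded ip_def] have "\<forall>B\<in>Pow {..<n}. cnj (X B) * X B = 0"
      using sum_nonneg_eq_0_iff[of "Pow {..<n}" "\<lambda>B. cnj (X B) * X B"] nn by auto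
    with True show ?thesis by simp
  next
    case False then show ?thesis using X unfolding clif_def by auto
  qed
qed

lemma scalar_dagger: assumes "M \<in> clif n"
  shows "scalar_part (cm (cl_dagger p q M) M) = ip M M"
proof -
  have "ip M M = ip (cm M cl_one) M" using cl_one_right[OF assms] by simp
  also have "\<dots> = ip cl_one (cm (cl_dagger p q M) M)" by (rule adjoint)
  also have "\<dots> = (\<Sum>A\<in>Pow {..<n}. if A = {} then cm (cl_dagger p q M) M A else 0)"
    unfolding ip_def cl_one_def cl_basis_def by (intro sum.cong) auto
  also have "\<dots> = scalar_part (cm (cl_dagger p q M) M)" by (simp add: scalar_part_def)
  finally show ?thesis by simp
qed

definition binv :: "complex mat \<Rightarrow> cl" where
  "binv U = the_inv_into (clif n) \<beta> U"

lemma b_inj_on: "inj_on \<beta> (clif n)"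
  using beta unfolding is_beta_def bij_betw_def by auto

lemma b_image: "\<beta> ` clif n = beta_target n"
  using beta unfolding is_beta_def bij_betw_def by auto

lemma binv: assumes "U \<in> beta_target n" shows "binv U \<in> clif n" "\<beta> (binv U) = U"
  unfolding binv_def using assms b_inj_on b_image
    the_inv_into_into[OF b_inj_on, of U] f_the_inv_into_f[OF b_inj_on, of U] by auto

lemma binv_b: "X \<in> clif n \<Longrightarrow> binv (\<beta> X) = X"
  unfolding binv_def using b_inj_on by (rule the_inv_into_f_f)

definition hp :: "complex mat \<Rightarrow> complex mat \<Rightarrow> complex" where
  "hp U V = ip (binv U) (binv V)"

lemma target_mult: "U \<in> beta_target n \<Longrightarrow> V \<in> beta_target n \<Longrightarrow> U * V \<in> beta_target n"
  by (metis binv b_mult b_target cl_mult_clif)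

lemma target_smult: "V \<in> beta_target n \<Longrightarrow> c \<cdot>\<^sub>m V \<in> beta_target n"
  by (metis binv b_smult b_target clif_smult)

lemma binv_mult: assumes "M \<in> clif n" "U \<in> beta_target n"
  shows "binv (\<beta> M * U) = cm M (binv U)"
  by (metis assms binv b_mult binv_b cl_mult_clif)

lemma binv_smult: assumes "V \<in> beta_target n"
  shows "binv (c \<cdot>\<^sub>m V) = (\<lambda>C. c * binv V C)"
  by (metis assms binv b_smult binv_b clif_smult)

lemma binv_zero: "binv (0\<^sub>m NN NN) = 0"
  by (metis b_zero binv_b clif_zero)

lemma hp_adjoint: assumes "M \<in> clif n" "U \<in> beta_target n" "V \<in> beta_target n"
  shows "hp (\<beta> M * U) V = hp U (\<beta> (cl_dagger p q M) * V)"
  unfolding hp_def using assms by (simp add: binv_mult dagger_clif adjoint)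

lemma hp_smult_right: "V \<in> beta_target n \<Longrightarrow> hp U (c \<cdot>\<^sub>m V) = c * hp U V"
  unfolding hp_def by (simp add: binv_smult ip_smult_right)

lemma hp_zero_left: "hp (0\<^sub>m NN NN) V = 0"
  unfolding hp_def by (simp add: binv_zero ip_zero_left)

lemma hp_cnj: "hp V U = cnj (hp U V)"
  unfolding hp_def by (rule ip_cnj)

lemma hp_pos: "0 \<le> hp U U"
  unfolding hp_def by (rule ip_pos)

lemma hp_eq0: assumes "U \<in> beta_target n" "hp U U = 0" shows "U = 0\<^sub>m NN NN"
proof -
  have "binv U = 0" using assms binv ip_eq0 unfolding hp_def by blast
  then show ?thesis using binv(2)[OF assms(1)] b_zero by simp
qed

end

definition mtr :: "nat \<Rightarrow> complex mat \<Rightarrow> complex" where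
  "mtr m U = (\<Sum>i<m. U $$ (i, i))"

lemma mtr_add: "U \<in> carrier_mat m m \<Longrightarrow> V \<in> carrier_mat m m \<Longrightarrow> mtr m (U + V) = mtr m U + mtr m V"
  unfolding mtr_def by (simp add: sum.distrib)

lemma mtr_minus: "U \<in> carrier_mat m m \<Longrightarrow> V \<in> carrier_mat m m \<Longrightarrow> mtr m (U - V) = mtr m U - mtr m V"
  unfolding mtr_def by (simp add: sum_subtractf)

lemma mtr_smult: "U \<in> carrier_mat m m \<Longrightarrow> mtr m (c \<cdot>\<^sub>m U) = c * mtr m U"
  unfolding mtr_def by (simp add: sum_distrib_left)

lemma mtr_one: "mtr m (1\<^sub>m m) = of_nat m"
  unfolding mtr_def by simp

lemma mtr_comm: assumes "U \<in> carrier_mat m m" "V \<in> carrier_mat m m"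
  shows "mtr m (U * V) = mtr m (V * U)"
proof -
  have "mtr m (U * V) = (\<Sum>i<m. \<Sum>k<m. U $$ (i, k) * V $$ (k, i))"
    unfolding mtr_def using assms by (intro sum.cong refl) (auto simp: scalar_prod_def atLeast0LessThan)
  also have "\<dots> = (\<Sum>k<m. \<Sum>i<m. V $$ (k, i) * U $$ (i, k))"
    by (subst sum.swap) (simp add: mult.commute)
  also have "\<dots> = mtr m (V * U)"
    unfolding mtr_def using assms by (intro sum.cong refl) (auto simp: scalar_prod_def atLeast0LessThan)
  finally show ?thesis .
qed

lemma card_split_sign:
  assumes "finite B" "odd (card (B - {b}))"
  shows "basis_sign p {b} B = - basis_sign p B {b}"
proof -
  have c1: "card {(a, c). a \<in> {b} \<and> c \<in> B \<and> c < a} = card {c\<in>B. c < b}"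
  proof -
    have "{(a, c). a \<in> {b} \<and> c \<in> B \<and> c < a} = (\<lambda>c. (b, c)) ` {c\<in>B. c < b}" by auto
    then show ?thesis by (simp add: card_image inj_on_def)
  qed
  have c2: "card {(a, c). a \<in> B \<and> c \<in> {b} \<and> c < a} = card {c\<in>B. b < c}"
  proof -
    have "{(a, c). a \<in> B \<and> c \<in> {b} \<and> c < a} = (\<lambda>c. (c, b)) ` {c\<in>B. b < c}" by auto
    then show ?thesis by (simp add: card_image inj_on_def)
  qed
  have "B - {b} = {c\<in>B. c < b} \<union> {c\<in>B. b < c}" by auto
  then have "card (B - {b}) = card {c\<in>B. c < b} + card {c\<in>B. b < c}"
    using assms(1) by (simp add: card_Un_disjoint disjoint_iff)
  then have odd: "odd (card {c\<in>B. c < b} + card {c\<in>B. b < c})" using assms by simp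
  define x where "x = card {c\<in>B. c < b}"
  define y where "y = card {c\<in>B. b < c}"
  have "(-1::complex) ^ (x + y) = -1" using odd unfolding x_def y_def by (rule neg_one_odd_power)
  then have h2: "(-1::complex) ^ x * (-1) ^ y = -1" by (simp only: power_add)
  have "(-1::complex) ^ x = (-1) ^ x * ((-1) ^ y * (-1) ^ y)" by (simp only: m1_pow_sq mult_1_right)
  also have "\<dots> = ((-1) ^ x * (-1) ^ y) * (-1) ^ y" by (simp only: mult.assoc)
  also have "\<dots> = - ((-1) ^ y)" using h2 by simp
  finally have "(-1::complex) ^ card {c\<in>B. c < b} = - ((-1) ^ card {c\<in>B. b < c})"
    unfolding x_def y_def .
  then show ?thesis unfolding basis_sign_def c1 c2 by (simp add: Int_commute)
qed

context cb begin

definition tau :: "cl \<Rightarrow> complex" where "tau X = mtr NN (\<beta> X)"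

lemma tau_add: "X \<in> clif n \<Longrightarrow> Y \<in> clif n \<Longrightarrow> tau (X + Y) = tau X + tau Y"
  unfolding tau_def by (simp add: b_add mtr_add b_carrier)

lemma tau_smult: "X \<in> clif n \<Longrightarrow> tau (\<lambda>C. c * X C) = c * tau X"
  unfolding tau_def by (simp add: b_smult mtr_smult b_carrier)

lemma tau_zero: "tau 0 = 0"
  unfolding tau_def b_zero mtr_def by simp

lemma tau_sum: "finite S \<Longrightarrow> (\<And>i. i \<in> S \<Longrightarrow> f i \<in> clif n) \<Longrightarrow> tau (sum f S) = (\<Sum>i\<in>S. tau (f i))"
  by (induct S rule: finite_induct) (auto simp: tau_zero tau_add clif_sum)

lemma tau_comm: "X \<in> clif n \<Longrightarrow> Y \<in> clif n \<Longrightarrow> tau (cm X Y) = tau (cm Y X)"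
  unfolding tau_def by (simp add: b_mult mtr_comm b_carrier)

lemma tau_one: "tau cl_one = of_nat NN"
  unfolding tau_def b_one mtr_one ..

lemma tau_anti:
  assumes b: "b < n" and B: "B \<subseteq> {..<n}" and odd: "odd (card (B - {b}))"
  shows "tau (e (sd B {b})) = 0"
proof -
  let ?A = "sd B {b}"
  have A: "?A \<subseteq> {..<n}" using b B by auto
  have bb: "{b} \<subseteq> {..<n}" using b by auto
  have finB: "finite B" using B finite_subset by blast
  have AB: "sd ?A {b} = B" by auto
  have BA: "sd {b} B = ?A" by auto
  let ?s1 = "sg ?A {b}"
  have m1: "cm (e ?A) (e {b}) = (\<lambda>C. ?s1 * e B C)"
    using cl_mult_basis[OF A bb] AB by simp
  have "cm (e {b}) (cm (e ?A) (e {b})) = (\<lambda>C. ?s1 * (sg {b} B * e ?A C))"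
    unfolding m1 cl_mult_smult_right cl_mult_basis[OF bb B] BA ..
  then have t1: "tau (cm (e {b}) (cm (e ?A) (e {b}))) = ?s1 * sg {b} B * tau (e ?A)"
    using tau_smult[OF cl_basis_clif[OF A]] tau_smult[OF clif_smult[OF cl_basis_clif[OF A]]]
    by (simp add: mult.assoc)
  have "cm (cm (e ?A) (e {b})) (e {b}) = (\<lambda>C. ?s1 * (sg B {b} * e ?A C))"
    unfolding m1 cl_mult_smult_left cl_mult_basis[OF B bb] ..
  then have t2: "tau (cm (cm (e ?A) (e {b})) (e {b})) = ?s1 * sg B {b} * tau (e ?A)"
    using tau_smult[OF cl_basis_clif[OF A]] tau_smult[OF clif_smult[OF cl_basis_clif[OF A]]]
    by (simp add: mult.assoc)
  have "tau (cm (e {b}) (cm (e ?A) (e {b}))) = tau (cm (cm (e ?A) (e {b})) (e {b}))"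
    by (rule tau_comm) (auto intro: cl_basis_clif[OF bb] cl_basis_clif[OF A] cl_mult_clif)
  then have "?s1 * sg {b} B * tau (e ?A) = ?s1 * sg B {b} * tau (e ?A)" using t1 t2 by simp
  then have "sg {b} B * tau (e ?A) = sg B {b} * tau (e ?A)"
    using basis_sign_nz[of p ?A "{b}"] by (simp add: mult.assoc)
  then have "- sg B {b} * tau (e ?A) = sg B {b} * tau (e ?A)"
    using card_split_sign[OF finB odd] by simp
  then show ?thesis using basis_sign_nz[of p B "{b}"] by simp
qed

end

lemma cl_basis_apply: "cl_basis A C = (if C = A then 1 else 0)"
  unfolding cl_basis_def by simp

lemma sign_central:
  assumes "odd n" "B \<subseteq> {..<n}"
  shows "basis_sign p {..<n} B = basis_sign p B {..<n}"
proof -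
  let ?A = "{..<n::nat}"
  let ?X1 = "{(a, b). a \<in> ?A \<and> b \<in> B \<and> b < a}"
  let ?X2 = "{(a, b). a \<in> B \<and> b \<in> ?A \<and> b < a}"
  let ?Y2 = "{(a, b). a \<in> ?A \<and> b \<in> B \<and> a < b}"
  have finB: "finite B" using assms(2) finite_subset by blast
  have f1: "finite ?X1" by (rule finite_subset[of _ "?A \<times> B"]) (auto simp: finB)
  have f2: "finite ?Y2" by (rule finite_subset[of _ "?A \<times> B"]) (auto simp: finB)
  have c2: "card ?X2 = card ?Y2"
  proof -
    have "?X2 = (\<lambda>(a,b). (b,a)) ` ?Y2" by auto
    then show ?thesis by (simp add: card_image inj_on_def)
  qed
  have u: "?X1 \<union> ?Y2 = ?A \<times> B - (\<lambda>b. (b,b)) ` B" using assms(2) by auto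
  have "card (?A \<times> B - (\<lambda>b. (b,b)) ` B) = n * card B - card B"
    using assms(2) finB by (subst card_Diff_subset) (auto simp: card_cartesian_product card_image inj_on_def)
  then have "card ?X1 + card ?X2 = n * card B - card B"
    using u c2 f1 f2 by (simp add: card_Un_disjoint[symmetric] disjoint_iff) 
  also have "\<dots> = (n - 1) * card B" by (simp add: diff_mult_distrib)
  finally have ev: "even (card ?X1 + card ?X2)" using assms(1) by simp
  define x where "x = card ?X1"
  define y where "y = card ?X2"
  have "(-1::complex) ^ (x + y) = 1" using ev unfolding x_def y_def by (rule neg_one_even_power)
  then have h2: "(-1::complex) ^ x * (-1) ^ y = 1" by (simp only: power_add)
  have "(-1::complex) ^ x = (-1) ^ x * ((-1) ^ y * (-1) ^ y)" by (simp only: m1_pow_sq mult_1_right)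
  also have "\<dots> = ((-1) ^ x * (-1) ^ y) * (-1) ^ y" by (simp only: mult.assoc)
  also have "\<dots> = (-1) ^ y" using h2 by simp
  finally have "(-1::complex) ^ x = (-1) ^ y" .
  then show ?thesis unfolding basis_sign_def x_def y_def by (simp add: Int_commute)
qed

definition Emat :: "nat \<Rightarrow> nat \<Rightarrow> nat \<Rightarrow> complex mat" where
  "Emat m i j = mat m m (\<lambda>(k,l). if k = i \<and> l = j then 1 else 0)"

lemma Emat_right: assumes "Z \<in> carrier_mat m m" "k < m" "i < m" "j < m"
  shows "(Z * Emat m i j) $$ (k, j) = Z $$ (k, i)"
proof -
  have "(Z * Emat m i j) $$ (k, j) = (\<Sum>l\<in>{0..<m}. Z $$ (k, l) * (if l = i then 1 else 0))"
    using assms unfolding Emat_def by (simp add: scalar_prod_def)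
  also have "\<dots> = Z $$ (k, i)" using assms by (simp add: if_distrib cong: if_cong)
  finally show ?thesis .
qed

lemma Emat_left: assumes "Z \<in> carrier_mat m m" "k < m" "i < m" "j < m"
  shows "(Emat m i j * Z) $$ (k, j) = (if k = i then Z $$ (j, j) else 0)"
proof -
  have "(Emat m i j * Z) $$ (k, j) = (\<Sum>l\<in>{0..<m}. (if k = i \<and> l = j then 1 else 0) * Z $$ (l, j))"
    using assms unfolding Emat_def by (simp add: scalar_prod_def)
  also have "\<dots> = (\<Sum>l\<in>{0..<m}. if l = j then (if k = i then Z $$ (j, j) else 0) else 0)"
    by (intro sum.cong) auto
  also have "\<dots> = (if k = i then Z $$ (j, j) else 0)" using assms by simp
  finally show ?thesis .
qed

context cb begin

lemma NN_even: "NN = 2 * (NN div 2)" "NN div 2 > 0"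
proof -
  have "(n + 1) div 2 \<ge> 1" using n1 by simp
  then obtain k where k: "(n + 1) div 2 = Suc k" by (cases "(n + 1) div 2") auto
  show "NN = 2 * (NN div 2)" "NN div 2 > 0" unfolding clif_N_def k by auto
qed

lemma central_comm: assumes "odd n" "X \<in> clif n"
  shows "cm (e {..<n}) X = cm X (e {..<n})"
proof
  fix C
  let ?A = "{..<n}"
  let ?P = "Pow ?A"
  have "cm (e ?A) X C = (\<Sum>A'\<in>?P. if A' = ?A then (\<Sum>B\<in>?P. if sd ?A B = C then X B * sg ?A B else 0) else 0)"
    unfolding cl_mult_def
  proof (intro sum.cong refl)
    fix A' assume "A' \<in> ?P"
    show "(\<Sum>B\<in>?P. if sd A' B = C then e ?A A' * X B * sg A' B else 0) =
          (if A' = ?A then (\<Sum>B\<in>?P. if sd ?A B = C then X B * sg ?A B else 0) else 0)"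
      by (cases "A' = ?A") (simp_all add: cl_basis_apply cong: if_cong)
  qed
  also have "\<dots> = (\<Sum>B\<in>?P. if sd ?A B = C then X B * sg ?A B else 0)"
    by simp
  also have "\<dots> = (\<Sum>B\<in>?P. if sd B ?A = C then X B * sg B ?A else 0)"
  proof (intro sum.cong refl)
    fix B assume "B \<in> ?P"
    then have "sg ?A B = sg B ?A" using sign_central[OF assms(1)] by auto
    moreover have "sd ?A B = sd B ?A" by auto
    ultimately show "(if sd ?A B = C then X B * sg ?A B else 0) = (if sd B ?A = C then X B * sg B ?A else 0)"
      by simp
  qed
  also have "\<dots> = (\<Sum>B\<in>?P. \<Sum>A'\<in>?P. if sd B A' = C then X B * e ?A A' * sg B A' else 0)"
  proof (intro sum.cong refl)
    fix B assume "B \<in> ?P"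
    have "(\<Sum>A'\<in>?P. if sd B A' = C then X B * e ?A A' * sg B A' else 0) =
      (\<Sum>A'\<in>?P. if A' = ?A then (if sd B ?A = C then X B * sg B ?A else 0) else 0)"
      by (intro sum.cong refl) (auto simp: cl_basis_apply cong: if_cong)
    then show "(if sd B ?A = C then X B * sg B ?A else 0) =
      (\<Sum>A'\<in>?P. if sd B A' = C then X B * e ?A A' * sg B A' else 0)" by simp
  qed
  also have "\<dots> = cm X (e ?A) C"
    unfolding cl_mult_def ..
  finally show "cm (e ?A) X C = cm X (e ?A) C" .
qed

lemma tau_central: assumes odd: "odd n" shows "tau (e {..<n}) = 0"
proof -
  let ?A = "{..<n}"
  define Z where "Z = \<beta> (e ?A)"
  define h where "h = NN div 2"
  have A: "?A \<subseteq> {..<n}" by simp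
  have eA: "e ?A \<in> clif n" by (rule cl_basis_clif[OF A])
  have Z: "Z \<in> carrier_mat NN NN" unfolding Z_def by (rule b_carrier[OF eA])
  have NN: "NN = 2 * h" "h > 0" using NN_even unfolding h_def by auto
  have tgt: "beta_target n = {U \<in> carrier_mat NN NN. \<forall>i<NN. \<forall>j<NN. ((i < h) \<noteq> (j < h)) \<longrightarrow> U $$ (i, j) = 0}"
    unfolding beta_target_def h_def Let_def using odd by simp
  have comm: "Z * U = U * Z" if U: "U \<in> beta_target n" for U
  proof -
    obtain X where X: "X \<in> clif n" "\<beta> X = U" using b_surj[OF U] by blast
    have "Z * U = \<beta> (cm (e ?A) X)" unfolding Z_def using X eA by (simp add: b_mult)
    also have "\<dots> = \<beta> (cm X (e ?A))" using central_comm[OF odd X(1)] by simp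
    also have "\<dots> = U * Z" unfolding Z_def using X eA by (simp add: b_mult)
    finally show ?thesis .
  qed
  have E_t: "Emat NN i j \<in> beta_target n" if "i < NN" "j < NN" "(i < h) = (j < h)" for i j
    unfolding tgt Emat_def using that by auto
  have key: "Z $$ (k, i) = (if k = i then Z $$ (j, j) else 0)"
    if "k < NN" "i < NN" "j < NN" "(i < h) = (j < h)" for k i j
  proof -
    have "(Z * Emat NN i j) $$ (k, j) = (Emat NN i j * Z) $$ (k, j)"
      using comm[OF E_t[OF that(2-4)]] by simp
    then show ?thesis using Emat_right[OF Z that(1-3)] Emat_left[OF Z that(1-3)] by simp
  qed
  define a where "a = Z $$ (0, 0)"
  define b where "b = Z $$ (h, h)"
  have offd: "Z $$ (k, i) = 0" if "k < NN" "i < NN" "k \<noteq> i" for k i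
    using key[OF that(1,2,2)] that by simp
  have diag: "Z $$ (i, i) = (if i < h then a else b)" if "i < NN" for i
  proof (cases "i < h")
    case True
    then show ?thesis using key[of i i 0] that NN unfolding a_def by simp
  next
    case False
    then show ?thesis using key[of i i h] that NN unfolding b_def by simp
  qed
  have ZZ: "Z * Z = sg ?A ?A \<cdot>\<^sub>m 1\<^sub>m NN"
  proof -
    have "Z * Z = \<beta> (cm (e ?A) (e ?A))" unfolding Z_def using eA by (simp add: b_mult)
    also have "cm (e ?A) (e ?A) = (\<lambda>C. sg ?A ?A * cl_one C)"
      unfolding cl_mult_basis[OF A A] cl_one_def by simp
    also have "\<beta> \<dots> = sg ?A ?A \<cdot>\<^sub>m 1\<^sub>m NN" by (simp add: b_smult cl_one_clif b_one)
    finally show ?thesis .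
  qed
  have sq: "Z $$ (i, i) * Z $$ (i, i) = sg ?A ?A" if "i < NN" for i
  proof -
    have "(Z * Z) $$ (i, i) = (\<Sum>l\<in>{0..<NN}. Z $$ (i, l) * Z $$ (l, i))"
      using Z that by (simp add: scalar_prod_def)
    also have "\<dots> = (\<Sum>l\<in>{0..<NN}. if l = i then Z $$ (i, i) * Z $$ (i, i) else 0)"
      by (intro sum.cong refl) (auto simp: offd that)
    also have "\<dots> = Z $$ (i, i) * Z $$ (i, i)" using that by simp
    finally show ?thesis using ZZ that by simp
  qed
  have a2: "a * a = sg ?A ?A" using sq[of 0] NN diag[of 0] by simp
  have b2: "b * b = sg ?A ?A" using sq[of h] NN diag[of h] by simp
  have ab: "a \<noteq> b"
  proof
    assume "a = b"
    then have "Z = a \<cdot>\<^sub>m 1\<^sub>m NN"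
      using Z diag offd by (intro eq_matI) auto
    also have "\<dots> = \<beta> (\<lambda>C. a * cl_one C)" by (simp add: b_smult cl_one_clif b_one)
    finally have "e ?A = (\<lambda>C. a * cl_one C)"
      unfolding Z_def by (rule b_inj[OF eA clif_smult[OF cl_one_clif]])
    then have "e ?A ?A = a * cl_one ?A" by metis
    moreover have "?A \<noteq> {}" using n1 by (metis lessThan_iff less_le_trans less_numeral_extra(1) empty_iff)
    ultimately show False unfolding cl_one_def cl_basis_def by simp
  qed
  have "(a - b) * (a + b) = 0" using a2 b2 by (simp add: algebra_simps)
  then have apb: "a + b = 0" using ab by simp
  have "tau (e ?A) = (\<Sum>i<NN. Z $$ (i, i))" unfolding tau_def mtr_def Z_def ..
  also have "\<dots> = (\<Sum>i<NN. if i < h then a else b)" by (intro sum.cong refl) (simp add: diag)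
  also have "\<dots> = (\<Sum>i<h. a) + (\<Sum>i\<in>{h..<NN}. b)"
  proof -
    have "{..<NN} = {..<h} \<union> {h..<NN}" using NN by auto
    then show ?thesis by (simp add: sum.union_disjoint disjoint_iff)
  qed
  also have "\<dots> = of_nat h * (a + b)" using NN by (simp add: algebra_simps)
  finally show ?thesis using apb by simp
qed

lemma tau_basis: assumes A: "A \<subseteq> {..<n}" "A \<noteq> {}" shows "tau (e A) = 0"
proof -
  have finA: "finite A" using A finite_subset by blast
  show ?thesis
  proof (cases "even (card A)")
    case True
    obtain b where b: "b \<in> A" using A by auto
    let ?B = "A - {b}"
    have "sd ?B {b} = A" using b by auto
    moreover have "odd (card (?B - {b}))"
    proof -
      have "card A > 0" using finA A by (simp add: card_gt_0_iff)
      then have "card (?B - {b}) = card A - 1" using b finA by simp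
      then show ?thesis using True \<open>card A > 0\<close> by simp
    qed
    ultimately show ?thesis using tau_anti[of b ?B] b A by auto
  next
    case False
    show ?thesis
    proof (cases "A = {..<n}")
      case True
      then show ?thesis using False tau_central by simp
    next
      case neq: False
      then obtain b where b: "b < n" "b \<notin> A" using A by auto
      let ?B = "insert b A"
      have "sd ?B {b} = A" using b by auto
      moreover have "?B - {b} = A" using b by auto
      ultimately show ?thesis using tau_anti[of b ?B] b A False by auto
    qed
  qed
qed

lemma tau_formula: assumes X: "X \<in> clif n" shows "tau X = of_nat NN * X {}"
proof -
  have "tau X = tau (\<Sum>A\<in>Pow {..<n}. (\<lambda>C. X A * e A C))"
    using clif_expand[OF X] by simp
  also have "\<dots> = (\<Sum>A\<in>Pow {..<n}. tau (\<lambda>C. X A * e A C))"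
    by (rule tau_sum) (auto intro: clif_smult cl_basis_clif)
  also have "\<dots> = (\<Sum>A\<in>Pow {..<n}. if A = {} then X {} * of_nat NN else 0)"
  proof (intro sum.cong refl)
    fix A assume "A \<in> Pow {..<n}"
    then show "tau (\<lambda>C. X A * e A C) = (if A = {} then X {} * of_nat NN else 0)"
      using tau_smult[OF cl_basis_clif[of A]] tau_basis[of A] tau_one unfolding cl_one_def by auto
  qed
  also have "\<dots> = of_nat NN * X {}" by simp
  finally show ?thesis .
qed

end

lemma sum_atMost_rev: "(\<Sum>k\<le>(m::nat). f k) = (\<Sum>j\<le>m. f (m - j))"
  by (rule sum.reindex_bij_witness[where i="\<lambda>j. m - j" and j="\<lambda>k. m - k"]) auto

lemma horner_coeff:
  fixes Q \<chi> :: "complex poly"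
  assumes eq: "Q * [:-y, 1:] = \<chi>" and deg: "degree \<chi> = m" and m: "m \<ge> 1"
  shows "t \<le> m - 1 \<Longrightarrow> coeff Q (m - 1 - t) = (\<Sum>j\<le>t. coeff \<chi> (m - j) * y ^ (t - j))"
proof (induct t)
  have chi0: "\<chi> \<noteq> 0" using deg m by auto
  then have Q0: "Q \<noteq> 0" using eq by auto
  have "degree (Q * [:-y, 1:]) = degree Q + degree [:-y, 1:]" by (rule degree_mult_eq) (use Q0 in auto)
  then have "degree \<chi> = degree Q + 1" using eq by simp
  then have degQ: "degree Q < m" using deg by simp
  have rec: "coeff Q k = coeff \<chi> (Suc k) + y * coeff Q (Suc k)" for k
  proof -
    have "coeff \<chi> (Suc k) = coeff (Polynomial.smult (-y) Q + pCons 0 Q) (Suc k)"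
      using eq[symmetric] by simp
    then show ?thesis by simp
  qed
  {
    case 0
    have "coeff Q (m - 1) = coeff \<chi> m + y * coeff Q m" using rec[of "m - 1"] m by simp
    also have "coeff Q m = 0" using degQ by (simp add: coeff_eq_0)
    finally show ?case by simp
  next
    case (Suc t)
    then have "m - 1 - t = Suc (m - 1 - Suc t)" by simp
    then have "coeff Q (m - 1 - Suc t) = coeff \<chi> (m - 1 - t) + y * coeff Q (m - 1 - t)"
      using rec[of "m - 1 - Suc t"] by simp
    also have "coeff Q (m - 1 - t) = (\<Sum>j\<le>t. coeff \<chi> (m - j) * y ^ (t - j))" using Suc by simp
    also have "coeff \<chi> (m - 1 - t) + y * (\<Sum>j\<le>t. coeff \<chi> (m - j) * y ^ (t - j))
        = (\<Sum>j\<le>Suc t. coeff \<chi> (m - j) * y ^ (Suc t - j))"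
    proof -
      have "y * (\<Sum>j\<le>t. coeff \<chi> (m - j) * y ^ (t - j)) = (\<Sum>j\<le>t. y * (coeff \<chi> (m - j) * y ^ (t - j)))"
        by (rule sum_distrib_left)
      also have "\<dots> = (\<Sum>j\<le>t. coeff \<chi> (m - j) * y ^ (Suc t - j))"
      proof (rule sum.cong[OF refl])
        fix j assume "j \<in> {..t}"
        then have "Suc t - j = Suc (t - j)" by auto
        then show "y * (coeff \<chi> (m - j) * y ^ (t - j)) = coeff \<chi> (m - j) * y ^ (Suc t - j)"
          by (simp only: power_Suc) (simp add: mult.left_commute)
      qed
      finally have "y * (\<Sum>j\<le>t. coeff \<chi> (m - j) * y ^ (t - j)) = (\<Sum>j\<le>t. coeff \<chi> (m - j) * y ^ (Suc t - j))" .
      moreover have "m - 1 - t = m - Suc t" by simp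
      ultimately show ?thesis by simp
    qed
    finally show ?case .
  }
qed

lemma newton:
  fixes l :: "nat \<Rightarrow> complex"
  assumes s: "1 \<le> s" "s \<le> m"
  shows "of_nat s * coeff (\<Prod>i<m. [:- l i, 1:]) (m - s)
    + (\<Sum>j<s. coeff (\<Prod>i<m. [:- l i, 1:]) (m - j) * (\<Sum>i<m. l i ^ (s - j))) = 0"
proof -
  define \<chi> where "\<chi> = (\<Prod>i<m. [:- l i, 1:])"
  define a where "a j = coeff \<chi> (m - j)" for j
  define pw where "pw k = (\<Sum>i<m. l i ^ k)" for k
  have m: "m \<ge> 1" using s by simp
  have deg: "degree \<chi> = m" unfolding \<chi>_def by (subst degree_prod_eq_sum_degree) auto
  have lc: "coeff \<chi> m = 1" using lead_coeff_prod[of "\<lambda>i. [:- l i, 1:]" "{..<m}"] deg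
    unfolding \<chi>_def by simp
  define Q where "Q i = (\<Prod>j\<in>{..<m} - {i}. [:- l j, 1:])" for i
  have QX: "Q i * [:- l i, 1:] = \<chi>" if "i < m" for i
    unfolding Q_def \<chi>_def using that by (simp add: prod.remove mult.commute)
  have pw0: "pw 0 = of_nat m" unfolding pw_def by simp
  have main: "(\<Sum>j\<le>t. a j * pw (t - j)) = of_nat (m - t) * a t" if t: "t < m" for t
  proof -
    have "pderiv \<chi> = (\<Sum>i<m. Q i)"
      unfolding \<chi>_def pderiv_prod Q_def by (simp add: pderiv_pCons)
    then have "coeff (pderiv \<chi>) (m - 1 - t) = (\<Sum>i<m. coeff (Q i) (m - 1 - t))"
      by (simp add: coeff_sum)
    also have "\<dots> = (\<Sum>i<m. \<Sum>j\<le>t. a j * l i ^ (t - j))"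
      unfolding a_def using horner_coeff[OF QX deg m] t by simp
    also have "\<dots> = (\<Sum>j\<le>t. a j * pw (t - j))"
      unfolding pw_def by (subst sum.swap) (simp add: sum_distrib_left)
    finally have 1: "coeff (pderiv \<chi>) (m - 1 - t) = (\<Sum>j\<le>t. a j * pw (t - j))" .
    have "coeff (pderiv \<chi>) (m - 1 - t) = of_nat (Suc (m - 1 - t)) * coeff \<chi> (Suc (m - 1 - t))"
      by (rule coeff_pderiv)
    also have "Suc (m - 1 - t) = m - t" using t by simp
    finally show ?thesis using 1 unfolding a_def by simp
  qed
  show ?thesis
  proof (cases "s < m")
    case True
    have "(\<Sum>j\<le>s. a j * pw (s - j)) = (\<Sum>j<s. a j * pw (s - j)) + a s * of_nat m"
      by (simp add: lessThan_Suc_atMost[symmetric] pw0)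
    then have "(\<Sum>j<s. a j * pw (s - j)) + a s * of_nat m = of_nat (m - s) * a s"
      using main[OF True] by simp
    moreover have "of_nat (m - s) = (of_nat m - of_nat s :: complex)" using True by (simp add: of_nat_diff)
    ultimately have "of_nat s * a s + (\<Sum>j<s. a j * pw (s - j)) = 0" by (simp add: algebra_simps)
    then show ?thesis unfolding a_def pw_def \<chi>_def .
  next
    case False
    then have sm: "s = m" using s by simp
    have "poly \<chi> (l i) = 0" if "i < m" for i
      unfolding \<chi>_def poly_prod using that by (auto intro!: prod_zero)
    then have "0 = (\<Sum>i<m. poly \<chi> (l i))" by simp
    also have "\<dots> = (\<Sum>i<m. \<Sum>j\<le>m. a j * l i ^ (m - j))"
    proof (intro sum.cong refl)
      fix i
      have "poly \<chi> (l i) = (\<Sum>k\<le>m. coeff \<chi> k * l i ^ k)" by (simp add: poly_altdef deg)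
      also have "\<dots> = (\<Sum>j\<le>m. coeff \<chi> (m - j) * l i ^ (m - j))" by (rule sum_atMost_rev)
      finally show "poly \<chi> (l i) = (\<Sum>j\<le>m. a j * l i ^ (m - j))" unfolding a_def .
    qed
    also have "\<dots> = (\<Sum>j\<le>m. a j * pw (m - j))"
      unfolding pw_def by (subst sum.swap) (simp add: sum_distrib_left)
    also have "\<dots> = (\<Sum>j<m. a j * pw (m - j)) + a m * of_nat m"
      by (simp add: lessThan_Suc_atMost[symmetric] pw0)
    finally show ?thesis unfolding sm a_def pw_def \<chi>_def by (simp add: algebra_simps)
  qed
qed

primrec fl :: "nat \<Rightarrow> complex mat \<Rightarrow> (nat \<Rightarrow> complex) \<Rightarrow> nat \<Rightarrow> complex mat" where
  "fl m A c 0 = A"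
| "fl m A c (Suc k) = A * (fl m A c k - c k \<cdot>\<^sub>m 1\<^sub>m m)"

primrec dp :: "(nat \<Rightarrow> complex) \<Rightarrow> nat \<Rightarrow> complex \<Rightarrow> complex" where
  "dp c 0 x = x"
| "dp c (Suc k) x = x * (dp c k x - c k)"

lemma fl_carrier: "A \<in> carrier_mat m m \<Longrightarrow> fl m A c k \<in> carrier_mat m m"
  by (induct k) auto

lemma sim_step:
  fixes A B P Q X :: "complex mat"
  assumes A: "A \<in> carrier_mat m m" and B: "B \<in> carrier_mat m m" and P: "P \<in> carrier_mat m m"
    and Q: "Q \<in> carrier_mat m m" and X: "X \<in> carrier_mat m m"
    and PQ: "P * Q = 1\<^sub>m m" and QP: "Q * P = 1\<^sub>m m" and APBQ: "A = P * B * Q"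
  shows "A * (P * X * Q - c \<cdot>\<^sub>m 1\<^sub>m m) = P * (B * (X - c \<cdot>\<^sub>m 1\<^sub>m m)) * Q"
proof -
  have "P * (X - c \<cdot>\<^sub>m 1\<^sub>m m) = P * X - P * (c \<cdot>\<^sub>m 1\<^sub>m m)"
    by (rule mult_minus_distrib_mat) (use P X in auto)
  also have "P * (c \<cdot>\<^sub>m 1\<^sub>m m) = c \<cdot>\<^sub>m P" using P by (simp add: mult_smult_distrib[OF P one_carrier_mat] right_mult_one_mat[OF P])
  finally have 1: "P * (X - c \<cdot>\<^sub>m 1\<^sub>m m) = P * X - c \<cdot>\<^sub>m P" .
  have "P * (X - c \<cdot>\<^sub>m 1\<^sub>m m) * Q = (P * X - c \<cdot>\<^sub>m P) * Q" unfolding 1 ..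
  also have "\<dots> = P * X * Q - (c \<cdot>\<^sub>m P) * Q"
    by (rule minus_mult_distrib_mat) (use P X Q in auto)
  also have "(c \<cdot>\<^sub>m P) * Q = c \<cdot>\<^sub>m 1\<^sub>m m" using P Q PQ by (simp add: mult_smult_assoc_mat[OF P Q])
  finally have 2: "P * X * Q - c \<cdot>\<^sub>m 1\<^sub>m m = P * (X - c \<cdot>\<^sub>m 1\<^sub>m m) * Q" by simp
  define Y where "Y = X - c \<cdot>\<^sub>m 1\<^sub>m m"
  have Y: "Y \<in> carrier_mat m m" unfolding Y_def using X by (intro minus_carrier_mat) simp
  have QPZ: "Q * (P * Z) = Z" if "Z \<in> carrier_mat m m" for Z
    using that P Q QP by (simp add: assoc_mult_mat[of Q m m P m Z m, symmetric])
  have "A * (P * Y * Q) = P * (B * Y) * Q"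
    unfolding APBQ using P Q B Y QPZ
    by (simp add: assoc_mult_mat[of _ m m _ m _ m])
  then show ?thesis unfolding 2 Y_def .
qed

lemma fl_sim: assumes A: "A \<in> carrier_mat m m" and sim: "similar_mat_wit A B P Q"
  shows "fl m A c k = P * fl m B c k * Q"
proof -
  note w = similar_mat_witD2[OF A sim]
  show ?thesis
  proof (induct k)
    case 0 then show ?case using w by simp
  next
    case (Suc k)
    have "fl m A c (Suc k) = A * (P * fl m B c k * Q - c k \<cdot>\<^sub>m 1\<^sub>m m)" using Suc by simp
    also have "\<dots> = P * (B * (fl m B c k - c k \<cdot>\<^sub>m 1\<^sub>m m)) * Q"
      by (rule sim_step) (use w fl_carrier[OF w(5)] in auto)
    finally show ?case by simp
  qed
qed

lemma mtr_sim: assumes "F \<in> carrier_mat m m" "P \<in> carrier_mat m m" "Q \<in> carrier_mat m m" "Q * P = 1\<^sub>m m"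
  shows "mtr m (P * F * Q) = mtr m F"
proof -
  have "mtr m (P * F * Q) = mtr m (P * (F * Q))" using assms by (simp add: assoc_mult_mat[of _ m m _ m _ m])
  also have "\<dots> = mtr m ((F * Q) * P)" using assms by (intro mtr_comm) auto
  also have "(F * Q) * P = F" using assms by (simp add: assoc_mult_mat[of _ m m _ m _ m])
  finally show ?thesis .
qed

lemma ut_mult: fixes X Y :: "complex mat" assumes X: "X \<in> carrier_mat m m" and Y: "Y \<in> carrier_mat m m"
  and ux: "upper_triangular X" and uy: "upper_triangular Y"
  shows "upper_triangular (X * Y)" "\<And>i. i < m \<Longrightarrow> (X * Y) $$ (i, i) = X $$ (i, i) * Y $$ (i, i)"
proof -
  have ent: "(X * Y) $$ (i, j) = (\<Sum>l\<in>{0..<m}. X $$ (i, l) * Y $$ (l, j))" if "i < m" "j < m" for i j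
    using X Y that by (simp add: scalar_prod_def)
  have Xz: "X $$ (i, l) = 0" if "i < m" "l < i" for i l using ux X that by (auto simp: upper_triangular_def)
  have Yz: "Y $$ (l, j) = 0" if "l < m" "j < l" for l j using uy Y that by (auto simp: upper_triangular_def)
  show "upper_triangular (X * Y)"
  proof (rule upper_triangularI)
    fix i j assume ij: "j < i" "i < dim_row (X * Y)"
    then have i: "i < m" using X by simp
    have "(X * Y) $$ (i, j) = (\<Sum>l\<in>{0..<m}. X $$ (i, l) * Y $$ (l, j))" using ent i ij by simp
    also have "\<dots> = 0"
    proof (rule sum.neutral, intro ballI)
      fix l assume "l \<in> {0..<m}"
      then show "X $$ (i, l) * Y $$ (l, j) = 0"
        using Xz[OF i, of l] Yz[of l j] ij by (cases "l < i") auto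
    qed
    finally show "(X * Y) $$ (i, j) = 0" .
  qed
  fix i assume i: "i < m"
  have "(X * Y) $$ (i, i) = (\<Sum>l\<in>{0..<m}. if l = i then X $$ (i, i) * Y $$ (i, i) else 0)"
    unfolding ent[OF i i]
  proof (rule sum.cong[OF refl])
    fix l assume "l \<in> {0..<m}"
    then show "X $$ (i, l) * Y $$ (l, i) = (if l = i then X $$ (i, i) * Y $$ (i, i) else 0)"
      using Xz[OF i, of l] Yz[of l i] by (cases "l < i"; cases "l = i") auto
  qed
  also have "\<dots> = X $$ (i, i) * Y $$ (i, i)" using i by simp
  finally show "(X * Y) $$ (i, i) = X $$ (i, i) * Y $$ (i, i)" .
qed

lemma ut_fl: assumes B: "B \<in> carrier_mat m m" and ub: "upper_triangular B"
  shows "upper_triangular (fl m B c k) \<and> (\<forall>i<m. fl m B c k $$ (i, i) = dp c k (B $$ (i, i)))"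
proof (induct k)
  case 0 then show ?case using ub by simp
next
  case (Suc k)
  let ?F = "fl m B c k"
  let ?G = "?F - c k \<cdot>\<^sub>m 1\<^sub>m m"
  have F: "?F \<in> carrier_mat m m" by (rule fl_carrier[OF B])
  have G: "?G \<in> carrier_mat m m" using F by (intro minus_carrier_mat) simp
  have uG: "upper_triangular ?G" using Suc F by (auto simp: upper_triangular_def)
  have dG: "\<And>i. i < m \<Longrightarrow> ?G $$ (i, i) = dp c k (B $$ (i, i)) - c k" using Suc F by simp
  show ?case using ut_mult[OF B G ub uG] dG by simp
qed

lemma dp_closed: "dp c k x = x ^ Suc k - (\<Sum>j<k. c j * x ^ (k - j))"
proof (induct k)
  case 0 then show ?case by simp
next
  case (Suc k)
  have "(\<Sum>j<Suc k. c j * x ^ (Suc k - j)) = (\<Sum>j<k. c j * x ^ (Suc k - j)) + c k * x" by simp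
  moreover have "(\<Sum>j<k. c j * x ^ (Suc k - j)) = x * (\<Sum>j<k. c j * x ^ (k - j))"
    unfolding sum_distrib_left
  proof (rule sum.cong[OF refl])
    fix j assume "j \<in> {..<k}"
    then have "Suc k - j = Suc (k - j)" by auto
    then show "c j * x ^ (Suc k - j) = x * (c j * x ^ (k - j))" by (simp add: mult.left_commute)
  qed
  moreover have "x * (x ^ Suc k - (\<Sum>j<k. c j * x ^ (k - j)) - c k)
     = x ^ Suc (Suc k) - (x * (\<Sum>j<k. c j * x ^ (k - j)) + c k * x)" by (simp add: algebra_simps)
  ultimately show ?case using Suc by simp
qed

lemma prod_list_nth: "prod_list (map f xs) = (\<Prod>i<length xs. f (xs ! i))"
  by (induct xs) (simp_all del: prod.lessThan_Suc add: prod.lessThan_Suc_shift)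

theorem faddeev:
  assumes A: "A \<in> carrier_mat m m"
    and c: "\<And>k. k < m \<Longrightarrow> of_nat (Suc k) * c k = mtr m (fl m A c k)"
  shows "k < m \<Longrightarrow> c k = - coeff (char_poly A) (m - Suc k)"
proof -
  obtain es where cp: "char_poly A = (\<Prod>a\<leftarrow>es. [:- a, 1:])" and les: "length es = m"
    using char_poly_factorized[OF A] by blast
  obtain B P Q where sd: "schur_decomposition A es = (B, P, Q)" by (cases "schur_decomposition A es") auto
  from schur_decomposition[OF A cp sd]
  have sim: "similar_mat_wit A B P Q" and ub: "upper_triangular B" and dB: "diag_mat B = es" by auto
  note w = similar_mat_witD2[OF A sim]
  have B: "B \<in> carrier_mat m m" using w by simp
  define l where "l i = es ! i" for i
  have Bii: "B $$ (i, i) = l i" if "i < m" for i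
  proof -
    have "diag_mat B ! i = B $$ (i, i)" using that B unfolding diag_mat_def by simp
    then show ?thesis using dB unfolding l_def by simp
  qed
  have chi: "char_poly A = (\<Prod>i<m. [:- l i, 1:])" unfolding cp prod_list_nth les l_def ..
  define a where "a j = coeff (char_poly A) (m - j)" for j
  define pw where "pw s = (\<Sum>i<m. l i ^ s)" for s
  have a0: "a 0 = 1" unfolding a_def using degree_monic_char_poly[OF A] by simp
  have tr: "mtr m (fl m A c k) = pw (Suc k) - (\<Sum>j<k. c j * pw (k - j))" for k
  proof -
    have "mtr m (fl m A c k) = mtr m (fl m B c k)"
      unfolding fl_sim[OF A sim] using w fl_carrier[OF B] by (intro mtr_sim) auto
    also have "\<dots> = (\<Sum>i<m. dp c k (l i))" unfolding mtr_def using ut_fl[OF B ub] Bii by simp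
    also have "\<dots> = (\<Sum>i<m. l i ^ Suc k - (\<Sum>j<k. c j * l i ^ (k - j)))" unfolding dp_closed ..
    also have "\<dots> = pw (Suc k) - (\<Sum>j<k. c j * pw (k - j))"
    proof -
      have "(\<Sum>i<m. \<Sum>j<k. c j * l i ^ (k - j)) = (\<Sum>j<k. c j * (\<Sum>i<m. l i ^ (k - j)))"
        by (subst sum.swap) (simp add: sum_distrib_left)
      then show ?thesis unfolding pw_def sum_subtractf by simp
    qed
    finally show ?thesis .
  qed
  have newt: "of_nat s * a s + (\<Sum>j<s. a j * pw (s - j)) = 0" if "1 \<le> s" "s \<le> m" for s
    using newton[OF that, of l] unfolding a_def pw_def chi .
  show "k < m \<Longrightarrow> c k = - coeff (char_poly A) (m - Suc k)"
  proof (induct k rule: less_induct)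
    case (less k)
    have IH: "c j = - a (Suc j)" if "j < k" for j using less that unfolding a_def by simp
    have "of_nat (Suc k) * c k = pw (Suc k) - (\<Sum>j<k. c j * pw (k - j))" using c[OF less(2)] tr by simp
    also have "\<dots> = pw (Suc k) + (\<Sum>j<k. a (Suc j) * pw (Suc k - Suc j))"
      using IH by (simp add: sum_negf[symmetric])
    also have "\<dots> = (\<Sum>j<Suc k. a j * pw (Suc k - j))"
      by (subst sum.lessThan_Suc_shift) (simp add: a0)
    also have "\<dots> = - (of_nat (Suc k) * a (Suc k))"
      using newt[of "Suc k"] less(2) by (simp add: eq_neg_iff_add_eq_0 add.commute)
    finally have "of_nat (Suc k) * c k = of_nat (Suc k) * (- a (Suc k))" by simp
    moreover have "(of_nat (Suc k) :: complex) \<noteq> 0" by (simp del: of_nat_Suc)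
    ultimately have "c k = - a (Suc k)" using mult_left_cancel by blast
    then show ?case unfolding a_def .
  qed
qed

context cb begin

definition cM :: "cl \<Rightarrow> nat \<Rightarrow> complex" where
  "cM M k = of_nat NN / of_nat (Suc k) * scalar_part (Mseq p q NN M k)"

lemma Mseq_clif: "M \<in> clif n \<Longrightarrow> Mseq p q NN M k \<in> clif n"
  by (induct k) (auto intro: cl_mult_clif)

lemma Mseq_beta: assumes M: "M \<in> clif n"
  shows "\<beta> (Mseq p q NN M k) = fl NN (\<beta> M) (cM M) k"
proof (induct k)
  case 0 then show ?case by simp
next
  case (Suc k)
  let ?c = "of_nat NN / of_nat (Suc k) * scalar_part (Mseq p q NN M k)"
  have X: "Mseq p q NN M k \<in> clif n" by (rule Mseq_clif[OF M])
  have "\<beta> (Mseq p q NN M (Suc k)) = \<beta> M * \<beta> (\<lambda>A. Mseq p q NN M k A - ?c * cl_one A)"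
    unfolding Mseq.simps by (rule b_mult[OF M b_sub_one(1)[OF X]])
  also have "\<dots> = \<beta> M * (fl NN (\<beta> M) (cM M) k - cM M k \<cdot>\<^sub>m 1\<^sub>m NN)"
    unfolding b_sub_one(2)[OF X] Suc cM_def ..
  finally show ?case by simp
qed

lemma char_coeff_matrix: assumes M: "M \<in> clif n" and k: "1 \<le> k" "k \<le> NN"
  shows "char_coeff p q M k = - coeff (char_poly (\<beta> M)) (NN - k)"
proof -
  have c: "of_nat (Suc j) * cM M j = mtr NN (fl NN (\<beta> M) (cM M) j)" if "j < NN" for j
  proof -
    have "mtr NN (fl NN (\<beta> M) (cM M) j) = tau (Mseq p q NN M j)"
      unfolding tau_def Mseq_beta[OF M] ..
    also have "\<dots> = of_nat NN * scalar_part (Mseq p q NN M j)"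
      unfolding tau_formula[OF Mseq_clif[OF M]] scalar_part_def ..
    finally show ?thesis unfolding cM_def by (simp del: of_nat_Suc)
  qed
  have "cM M (k - 1) = - coeff (char_poly (\<beta> M)) (NN - Suc (k - 1))"
    by (rule faddeev[OF b_carrier[OF M] c]) (use k in auto)
  moreover have "Suc (k - 1) = k" using k by simp
  moreover have "char_coeff p q M k = cM M (k - 1)"
    unfolding char_coeff_def cM_def using k by simp
  ultimately show ?thesis by simp
qed

end

definition cmat :: "nat \<Rightarrow> nat \<Rightarrow> nat set \<Rightarrow> complex vec \<Rightarrow> complex mat" where
  "cmat m j S v = mat m m (\<lambda>(i, k). if k = j \<and> i \<in> S then v $ i else 0)"

lemma cmat_carrier[simp]: "cmat m j S v \<in> carrier_mat m m"
  unfolding cmat_def by simp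

lemma cmat_mult:
  assumes X: "X \<in> carrier_mat m m" and j: "j < m" and v: "v \<in> carrier_vec m"
    and blk: "\<And>i l. i < m \<Longrightarrow> l < m \<Longrightarrow> (i \<in> S) \<noteq> (l \<in> S) \<Longrightarrow> X $$ (i, l) = 0"
  shows "X * cmat m j S v = cmat m j S (X *\<^sub>v v)"
proof (rule eq_matI)
  show "dim_row (X * cmat m j S v) = dim_row (cmat m j S (X *\<^sub>v v))"
       "dim_col (X * cmat m j S v) = dim_col (cmat m j S (X *\<^sub>v v))" using X by (auto simp: cmat_def)
  fix i k assume ik: "i < dim_row (cmat m j S (X *\<^sub>v v))" "k < dim_col (cmat m j S (X *\<^sub>v v))"
  then have i: "i < m" and k: "k < m" by (auto simp: cmat_def)
  have "(X * cmat m j S v) $$ (i, k) = (\<Sum>l\<in>{0..<m}. X $$ (i, l) * (if k = j \<and> l \<in> S then v $ l else 0))"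
    using X i k by (simp add: cmat_def scalar_prod_def)
  also have "\<dots> = (if k = j \<and> i \<in> S then (\<Sum>l\<in>{0..<m}. X $$ (i, l) * v $ l) else 0)"
  proof (cases "k = j")
    case True
    show ?thesis
    proof (cases "i \<in> S")
      case True
      have "(\<Sum>l\<in>{0..<m}. X $$ (i, l) * (if k = j \<and> l \<in> S then v $ l else 0)) = (\<Sum>l\<in>{0..<m}. X $$ (i, l) * v $ l)"
      proof (rule sum.cong[OF refl])
        fix l assume "l \<in> {0..<m}"
        then show "X $$ (i, l) * (if k = j \<and> l \<in> S then v $ l else 0) = X $$ (i, l) * v $ l"
          using \<open>k = j\<close> blk[OF i, of l] True by auto
      qed
      then show ?thesis using True \<open>k = j\<close> by simp
    next
      case False
      then show ?thesis using \<open>k = j\<close> blk[OF i] by (auto intro!: sum.neutral)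
    qed
  qed simp
  also have "\<dots> = cmat m j S (X *\<^sub>v v) $$ (i, k)"
    using X v i k by (simp add: cmat_def scalar_prod_def)
  finally show "(X * cmat m j S v) $$ (i, k) = cmat m j S (X *\<^sub>v v) $$ (i, k)" .
qed

lemma cmat_smult: "v \<in> carrier_vec m \<Longrightarrow> cmat m j S (a \<cdot>\<^sub>v v) = a \<cdot>\<^sub>m cmat m j S v"
  unfolding cmat_def by (intro eq_matI) auto

lemma cmat_zero_iff: assumes "j < m"
  shows "cmat m j S v = 0\<^sub>m m m \<longleftrightarrow> (\<forall>i<m. i \<in> S \<longrightarrow> v $ i = 0)"
proof
  assume "cmat m j S v = 0\<^sub>m m m"
  then have "\<And>i. i < m \<Longrightarrow> cmat m j S v $$ (i, j) = 0" using assms by simp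
  moreover have "\<And>i. i < m \<Longrightarrow> cmat m j S v $$ (i, j) = (if i \<in> S then v $ i else 0)"
    using assms by (simp add: cmat_def)
  ultimately show "\<forall>i<m. i \<in> S \<longrightarrow> v $ i = 0" by (metis (full_types))
next
  assume "\<forall>i<m. i \<in> S \<longrightarrow> v $ i = 0"
  then show "cmat m j S v = 0\<^sub>m m m" unfolding cmat_def by (intro eq_matI) auto
qed

context cb begin

definition fam :: "(nat \<times> nat set) list" where
  "fam = (if even n then [(0, {..<NN})] else [(0, {..<NN div 2}), (NN div 2, {NN div 2..<NN})])"

lemma fam_j: "(j, S) \<in> set fam \<Longrightarrow> j < NN"
  using NN_even unfolding fam_def by (auto split: if_splits)

lemma fam_blk: assumes "(j, S) \<in> set fam" "X \<in> beta_target n" "i < NN" "l < NN" "(i \<in> S) \<noteq> (l \<in> S)"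
  shows "X $$ (i, l) = 0"
proof (cases "even n")
  case True then show ?thesis using assms unfolding fam_def by auto
next
  case False
  then have "beta_target n = {A \<in> carrier_mat NN NN. \<forall>i<NN. \<forall>j<NN.
              ((i < NN div 2) \<noteq> (j < NN div 2)) \<longrightarrow> A $$ (i, j) = 0}"
    unfolding beta_target_def Let_def by simp
  then show ?thesis using assms False unfolding fam_def by auto
qed

lemma fam_target: assumes "(j, S) \<in> set fam" shows "cmat NN j S v \<in> beta_target n"
proof (cases "even n")
  case True then show ?thesis unfolding beta_target_def Let_def by simp
next
  case False
  then have "beta_target n = {A \<in> carrier_mat NN NN. \<forall>i<NN. \<forall>j<NN.
              ((i < NN div 2) \<noteq> (j < NN div 2)) \<longrightarrow> A $$ (i, j) = 0}"
    unfolding beta_target_def Let_def by simp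
  then show ?thesis using assms False NN_even unfolding fam_def cmat_def by auto
qed

lemma fam_cover: assumes "v \<in> carrier_vec NN"
  shows "v = 0\<^sub>v NN \<longleftrightarrow> (\<forall>(j, S)\<in>set fam. \<forall>i<NN. i \<in> S \<longrightarrow> v $ i = 0)"
proof
  assume "v = 0\<^sub>v NN" then show "\<forall>(j, S)\<in>set fam. \<forall>i<NN. i \<in> S \<longrightarrow> v $ i = 0" by auto
next
  assume h: "\<forall>(j, S)\<in>set fam. \<forall>i<NN. i \<in> S \<longrightarrow> v $ i = 0"
  have "v $ i = 0" if "i < NN" for i
  proof (cases "even n")
    case True then show ?thesis using h that unfolding fam_def by auto
  next
    case False
    show ?thesis
    proof (cases "i < NN div 2")
      case True then show ?thesis using h that False unfolding fam_def by auto
    next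
      case F2: False then show ?thesis using h that False unfolding fam_def by auto
    qed
  qed
  then show "v = 0\<^sub>v NN" using assms by (intro eq_vecI) auto
qed

lemma fam_mult: assumes "(j, S) \<in> set fam" "X \<in> beta_target n" "v \<in> carrier_vec NN"
  shows "X * cmat NN j S v = cmat NN j S (X *\<^sub>v v)"
  using assms beta_target_carrier fam_j fam_blk by (intro cmat_mult) auto

lemma hp_zero_right: "hp U (0\<^sub>m NN NN) = 0"
  using hp_cnj[of U "0\<^sub>m NN NN"] hp_zero_left by simp

lemma hp_adjoint2: assumes "M \<in> clif n" "U \<in> beta_target n" "V \<in> beta_target n"
  shows "hp (\<beta> (cl_dagger p q M) * V) U = hp V (\<beta> M * U)"
proof -
  have "hp (\<beta> (cl_dagger p q M) * V) U = cnj (hp U (\<beta> (cl_dagger p q M) * V))" by (rule hp_cnj)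
  also have "\<dots> = cnj (hp (\<beta> M * U) V)" using hp_adjoint[OF assms] by simp
  also have "\<dots> = hp V (\<beta> M * U)" using hp_cnj[of V "\<beta> M * U"] by simp
  finally show ?thesis .
qed

lemma hp_pos_strict: assumes "U \<in> beta_target n" "U \<noteq> 0\<^sub>m NN NN" shows "0 < hp U U"
  using hp_pos[of U] hp_eq0[OF assms(1)] assms(2) by (auto simp: order_le_less)

context
  fixes M assumes M: "M \<in> clif n"
begin

abbreviation "AA \<equiv> \<beta> M"
abbreviation "GG \<equiv> \<beta> (cl_dagger p q M)"

lemma AA_t: "AA \<in> beta_target n" using b_target[OF M] .
lemma GG_t: "GG \<in> beta_target n" using b_target[OF dagger_clif] .
lemma CC_t: "GG * AA \<in> beta_target n" by (rule target_mult[OF GG_t AA_t])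
lemma CC_beta: "GG * AA = \<beta> (cl_mult p q (cl_dagger p q M) M)" by (simp add: b_mult dagger_clif M)

lemma hpC: assumes "U \<in> beta_target n" shows "hp (AA * U) (AA * U) = hp U ((GG * AA) * U)"
proof -
  have "hp (AA * U) (AA * U) = hp U (GG * (AA * U))"
    by (rule hp_adjoint[OF M assms target_mult[OF AA_t assms]])
  also have "GG * (AA * U) = (GG * AA) * U"
    using GG_t AA_t assms beta_target_carrier by (intro assoc_mult_mat[of GG NN NN AA NN U NN, symmetric]) auto
  finally show ?thesis .
qed

lemma K1: assumes v: "v \<in> carrier_vec NN" and Cv: "(GG * AA) *\<^sub>v v = 0\<^sub>v NN"
  shows "AA *\<^sub>v v = 0\<^sub>v NN"
proof -
  have AAv: "AA *\<^sub>v v \<in> carrier_vec NN" using AA_t beta_target_carrier v by auto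
  have "\<forall>i<NN. i \<in> S \<longrightarrow> (AA *\<^sub>v v) $ i = 0" if jS: "(j, S) \<in> set fam" for j S
  proof -
    let ?W = "cmat NN j S v"
    have W: "?W \<in> beta_target n" by (rule fam_target[OF jS])
    have "(GG * AA) * ?W = cmat NN j S (0\<^sub>v NN)" using fam_mult[OF jS CC_t v] Cv by simp
    also have "\<dots> = 0\<^sub>m NN NN" using cmat_zero_iff[OF fam_j[OF jS]] by simp
    finally have "hp (AA * ?W) (AA * ?W) = 0" using hpC[OF W] hp_zero_right by simp
    then have "AA * ?W = 0\<^sub>m NN NN" using hp_eq0 target_mult[OF AA_t W] by blast
    then have "cmat NN j S (AA *\<^sub>v v) = 0\<^sub>m NN NN" using fam_mult[OF jS AA_t v] by simp
    then show ?thesis using cmat_zero_iff[OF fam_j[OF jS]] by simp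
  qed
  then show ?thesis using fam_cover[OF AAv] by auto
qed

lemma K2: assumes v: "v \<in> carrier_vec NN" and CCv: "(GG * AA) *\<^sub>v ((GG * AA) *\<^sub>v v) = 0\<^sub>v NN"
  shows "(GG * AA) *\<^sub>v v = 0\<^sub>v NN"
proof -
  have C: "GG * AA \<in> carrier_mat NN NN" using CC_t beta_target_carrier by auto
  have Cv: "(GG * AA) *\<^sub>v v \<in> carrier_vec NN" using C v by auto
  have ACv: "AA *\<^sub>v ((GG * AA) *\<^sub>v v) = 0\<^sub>v NN" by (rule K1[OF Cv CCv])
  have "\<forall>i<NN. i \<in> S \<longrightarrow> ((GG * AA) *\<^sub>v v) $ i = 0" if jS: "(j, S) \<in> set fam" for j S
  proof -
    let ?W = "cmat NN j S v"
    have W: "?W \<in> beta_target n" by (rule fam_target[OF jS])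
    have AW: "AA * ?W \<in> beta_target n" by (rule target_mult[OF AA_t W])
    have CW: "(GG * AA) * ?W \<in> beta_target n" by (rule target_mult[OF CC_t W])
    have CW': "(GG * AA) * ?W = GG * (AA * ?W)"
      using GG_t AA_t W beta_target_carrier by (intro assoc_mult_mat[of GG NN NN AA NN _ NN]) auto
    have "AA * ((GG * AA) * ?W) = cmat NN j S (AA *\<^sub>v ((GG * AA) *\<^sub>v v))"
      using fam_mult[OF jS CC_t v] fam_mult[OF jS AA_t Cv] by simp
    also have "\<dots> = 0\<^sub>m NN NN" using ACv cmat_zero_iff[OF fam_j[OF jS]] by simp
    finally have z: "AA * ((GG * AA) * ?W) = 0\<^sub>m NN NN" .
    have "hp ((GG * AA) * ?W) ((GG * AA) * ?W) = hp (GG * (AA * ?W)) ((GG * AA) * ?W)"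
      unfolding CW'[symmetric] ..
    also have "\<dots> = hp (AA * ?W) (AA * ((GG * AA) * ?W))"
      by (rule hp_adjoint2[OF M CW AW])
    also have "\<dots> = 0" unfolding z by (rule hp_zero_right)
    finally have "(GG * AA) * ?W = 0\<^sub>m NN NN" using hp_eq0[OF CW] by blast
    then have "cmat NN j S ((GG * AA) *\<^sub>v v) = 0\<^sub>m NN NN" using fam_mult[OF jS CC_t v] by simp
    then show ?thesis using cmat_zero_iff[OF fam_j[OF jS]] by simp
  qed
  then show ?thesis using fam_cover[OF Cv] by auto
qed

lemma E_nonneg: assumes v: "v \<in> carrier_vec NN" "v \<noteq> 0\<^sub>v NN" and ev: "(GG * AA) *\<^sub>v v = a \<cdot>\<^sub>v v"
  shows "0 \<le> a"
proof -
  obtain j S where jS: "(j, S) \<in> set fam" and nz: "\<not> (\<forall>i<NN. i \<in> S \<longrightarrow> v $ i = 0)"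
    using fam_cover[OF v(1)] v(2) by auto
  let ?W = "cmat NN j S v"
  have W: "?W \<in> beta_target n" by (rule fam_target[OF jS])
  have Wnz: "?W \<noteq> 0\<^sub>m NN NN" using cmat_zero_iff[OF fam_j[OF jS]] nz by simp
  have "(GG * AA) * ?W = a \<cdot>\<^sub>m ?W" using fam_mult[OF jS CC_t v(1)] ev cmat_smult[OF v(1)] by simp
  then have eq: "hp (AA * ?W) (AA * ?W) = a * hp ?W ?W" using hpC[OF W] hp_smult_right[OF W] by simp
  have x: "0 \<le> hp (AA * ?W) (AA * ?W)" by (rule hp_pos)
  have y: "0 < hp ?W ?W" by (rule hp_pos_strict[OF W Wnz])
  from x y eq show ?thesis
    by (auto simp: less_eq_complex_def less_complex_def zero_le_mult_iff)
qed

end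
end

lemma rank_nullity_mat:
  fixes A :: "complex mat" assumes A: "A \<in> carrier_mat m m"
  shows "vec_space.rank m A + kernel_dim A = m"
proof -
  interpret V: vec_space "TYPE(complex)" m .
  define T where "T = (\<lambda>v. A *\<^sub>v v)"
  have hom: "T \<in> LinearCombinations.module_hom class_ring V.V V.V"
    unfolding LinearCombinations.module_hom_def T_def using A
    by (auto simp: mult_add_distrib_mat_vec[OF A] mult_mat_vec[OF A])
  have mh: "mod_hom class_ring V.V V.V T"
    by (rule mod_hom.intro, unfold mod_hom_axioms_def) (intro_locales, intro_locales, rule hom)
  have lm: "linear_map class_ring V.V V.V T"
    unfolding linear_map_def
  proof (intro conjI)
    show "vectorspace class_ring V.V" by (rule V.vectorspace_axioms)
    show "vectorspace class_ring V.V" by (rule V.vectorspace_axioms)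
    show "mod_hom class_ring V.V V.V T"
      by (rule mod_hom.intro, unfold mod_hom_axioms_def) (intro_locales, intro_locales, rule hom)
  qed
  interpret L: linear_map class_ring V.V V.V T by (rule lm)
  have rn: "vectorspace.dim class_ring (V.vs L.imT) + vectorspace.dim class_ring (V.vs L.kerT) = V.dim"
    by (rule L.rank_nullity[OF V.fin_dim])
  have im: "L.imT = V.span (set (cols A))"
  proof -
    have "L.imT = T ` carrier_vec m" unfolding mod_hom.im_def[OF mh] by simp
    also have "\<dots> = V.col_space A" unfolding V.col_space_eq[OF A] T_def using A by auto
    finally show ?thesis unfolding V.col_space_def .
  qed
  have ker: "L.kerT = mat_kernel A"
    unfolding mod_hom.ker_def[OF mh] unfolding mat_kernel_def T_def using A by auto
  interpret K: kernel m m A by (unfold_locales, rule A)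
  have "kernel_dim A = K.dim" by simp
  then show ?thesis using rn unfolding im ker V.rank_def V.dim_is_n by simp
qed

lemma lin_coeff:
  fixes a :: complex
  shows "coeff ([:-a, 1:] * p) 0 = - a * coeff p 0"
    "coeff ([:-a, 1:] * p) (Suc i) = coeff p i - a * coeff p (Suc i)"
  by (simp_all add: mult_pCons_left)

lemma sign_lemma:
  fixes es :: "complex list"
  assumes "\<forall>a\<in>set es. 0 \<le> a"
  defines "z \<equiv> length (filter (\<lambda>a. a = 0) es)" and "L \<equiv> length es"
  shows "(\<forall>i. Im (coeff (\<Prod>a\<leftarrow>es. [:-a, 1:]) i) = 0)
    \<and> (\<forall>i. i < z \<longrightarrow> coeff (\<Prod>a\<leftarrow>es. [:-a, 1:]) i = 0)
    \<and> (\<forall>i. L < i \<longrightarrow> coeff (\<Prod>a\<leftarrow>es. [:-a, 1:]) i = 0)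
    \<and> (\<forall>i. z \<le> i \<longrightarrow> i \<le> L \<longrightarrow> 0 < (-1) ^ (L - i) * Re (coeff (\<Prod>a\<leftarrow>es. [:-a, 1:]) i))"
  using assms(1) unfolding z_def L_def
proof (induct es)
  case Nil
  show ?case by (auto simp: coeff_1 split: if_splits)
next
  case (Cons a es)
  define c where "c = coeff (\<Prod>a\<leftarrow>es. [:-a, 1:])"
  define z where "z = length (filter (\<lambda>a. a = 0) es)"
  define L where "L = length es"
  have zL: "z \<le> L" unfolding z_def L_def by (rule length_filter_le)
  have IH: "(\<forall>i. Im (c i) = 0) \<and> (\<forall>i. i < z \<longrightarrow> c i = 0) \<and> (\<forall>i. L < i \<longrightarrow> c i = 0)
     \<and> (\<forall>i. z \<le> i \<longrightarrow> i \<le> L \<longrightarrow> 0 < (-1) ^ (L - i) * Re (c i))"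
    using Cons unfolding c_def z_def L_def by auto
  have a0: "0 \<le> a" using Cons by auto
  have c'0: "coeff (\<Prod>a\<leftarrow>a # es. [:-a, 1:]) 0 = - a * c 0" unfolding c_def by (simp add: lin_coeff)
  have c'S: "coeff (\<Prod>a\<leftarrow>a # es. [:-a, 1:]) (Suc i) = c i - a * c (Suc i)" for i
    unfolding c_def by (simp add: lin_coeff)
  show ?case
  proof (cases "a = 0")
    case True
    have z': "length (filter (\<lambda>a. a = 0) (a # es)) = Suc z" using True unfolding z_def by simp
    have L': "length (a # es) = Suc L" unfolding L_def by simp
    have c'0': "coeff (\<Prod>a\<leftarrow>a # es. [:-a, 1:]) 0 = 0" using c'0 True by simp
    have c'S': "coeff (\<Prod>a\<leftarrow>a # es. [:-a, 1:]) (Suc i) = c i" for i using c'S[of i] True by simp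
    show ?thesis unfolding z' L'
    proof (intro conjI allI impI)
      fix i show "Im (coeff (\<Prod>a\<leftarrow>a # es. [:-a, 1:]) i) = 0"
        using IH c'0' c'S' by (cases i) auto
    next
      fix i assume "i < Suc z" then show "coeff (\<Prod>a\<leftarrow>a # es. [:-a, 1:]) i = 0"
        using IH c'0' c'S' by (cases i) auto
    next
      fix i assume "Suc L < i" then show "coeff (\<Prod>a\<leftarrow>a # es. [:-a, 1:]) i = 0"
        using IH c'0' c'S' by (cases i) auto
    next
      fix i assume "Suc z \<le> i" "i \<le> Suc L"
      then obtain j where j: "i = Suc j" "z \<le> j" "j \<le> L" by (cases i) auto
      then show "0 < (-1) ^ (Suc L - i) * Re (coeff (\<Prod>a\<leftarrow>a # es. [:-a, 1:]) i)"
        using IH c'S' by simp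
    qed
  next
    case False
    define r where "r = Re a"
    have ar: "a = complex_of_real r" using a0 unfolding r_def by (simp add: less_eq_complex_def complex_eq_iff)
    have r0: "0 < r" using a0 False ar by (auto simp: less_eq_complex_def)
    have z': "length (filter (\<lambda>a. a = 0) (a # es)) = z" using False unfolding z_def by simp
    have L': "length (a # es) = Suc L" unfolding L_def by simp
    have Imc: "\<And>i. Im (c i) = 0" using IH by simp
    have ReS: "Re (coeff (\<Prod>a\<leftarrow>a # es. [:-a, 1:]) (Suc i)) = Re (c i) - r * Re (c (Suc i))" for i
      by (subst c'S) (simp add: ar)
    have Re0: "Re (coeff (\<Prod>a\<leftarrow>a # es. [:-a, 1:]) 0) = - r * Re (c 0)"
      by (subst c'0) (simp add: ar)
    show ?thesis unfolding z' L'
    proof (intro conjI allI impI)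
      fix i show "Im (coeff (\<Prod>a\<leftarrow>a # es. [:-a, 1:]) i) = 0"
        using Imc c'0 c'S ar by (cases i) auto
    next
      fix i assume "i < z" then show "coeff (\<Prod>a\<leftarrow>a # es. [:-a, 1:]) i = 0"
        using IH c'0 c'S by (cases i) auto
    next
      fix i assume "Suc L < i" then show "coeff (\<Prod>a\<leftarrow>a # es. [:-a, 1:]) i = 0"
        using IH c'0 c'S by (cases i) auto
    next
      fix i assume iz: "z \<le> i" and iL: "i \<le> Suc L"
      show "0 < (-1) ^ (Suc L - i) * Re (coeff (\<Prod>a\<leftarrow>a # es. [:-a, 1:]) i)"
      proof (cases i)
        case 0
        then have "z = 0" using iz by simp
        then have pos: "0 < (-1) ^ L * Re (c 0)" using IH by auto
        have "(-1::real) ^ (Suc L - i) * Re (coeff (\<Prod>a\<leftarrow>a # es. [:-a, 1:]) i) = r * ((-1) ^ L * Re (c 0))"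
          using Re0 0 by simp
        then show ?thesis using pos r0 by simp
      next
        case (Suc j)
        have t1: "0 \<le> (-1) ^ (L - j) * Re (c j) \<and> (z \<le> j \<longrightarrow> 0 < (-1) ^ (L - j) * Re (c j))"
          using IH Suc iL by (cases "z \<le> j") auto
        have t2: "0 \<le> (-1) ^ (L - j) * (- r * Re (c (Suc j))) \<and> (Suc j \<le> L \<longrightarrow> 0 < (-1) ^ (L - j) * (- r * Re (c (Suc j))))"
        proof (cases "Suc j \<le> L")
          case True
          then have "L - j = Suc (L - Suc j)" by simp
          then have "(-1::real) ^ (L - j) * (- r * Re (c (Suc j))) = r * ((-1) ^ (L - Suc j) * Re (c (Suc j)))"
            by simp
          moreover have "0 < (-1) ^ (L - Suc j) * Re (c (Suc j))" using IH True Suc iz by auto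
          ultimately show ?thesis using r0 True by simp
        next
          case False
          then show ?thesis using IH by simp
        qed
        have "(-1::real) ^ (Suc L - i) * Re (coeff (\<Prod>a\<leftarrow>a # es. [:-a, 1:]) i)
            = (-1) ^ (L - j) * Re (c j) + (-1) ^ (L - j) * (- r * Re (c (Suc j)))"
        proof -
          have "(-1::real) ^ (Suc L - i) * Re (coeff (\<Prod>a\<leftarrow>a # es. [:-a, 1:]) i)
             = (-1) ^ (L - j) * (Re (c j) - r * Re (c (Suc j)))" unfolding Suc ReS by simp
          then show ?thesis by (simp add: algebra_simps)
        qed
        moreover have "z \<le> j \<or> Suc j \<le> L" using iz iL zL Suc by auto
        ultimately show ?thesis using t1 t2 by auto
      qed
    qed
  qed
qed

lemma min12: "sum_list (map (min 1) (L :: nat list)) = sum_list (map (min 2) L) \<Longrightarrow> sum_list L = sum_list (map (min 1) L)"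
proof (induct L)
  case Nil then show ?case by simp
next
  case (Cons x L)
  have le: "sum_list (map (min 1) L) \<le> sum_list (map (min 2) L)"
    by (induct L) (auto intro: add_mono)
  have "min 1 x \<le> min 2 x" by simp
  with Cons(2) le have "min 1 x = min (2::nat) x" and "sum_list (map (min 1) L) = sum_list (map (min 2) L)"
    by auto
  then show ?case using Cons(1) by (cases x) auto
qed

lemma order_prod_list: "order 0 (\<Prod>a\<leftarrow>es. [:-a, 1:]) = length (filter (\<lambda>a. a = 0) (es :: complex list))"
proof (induct es)
  case Nil then show ?case by (simp add: order_0I)
next
  case (Cons a es)
  have p0: "(\<Prod>a\<leftarrow>es. [:-a, 1:]) \<noteq> 0" by (auto simp: prod_list_zero_iff)
  have l0: "[:-a, 1:] \<noteq> (0::complex poly)" by simp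
  have nz: "[:-a, 1:] * (\<Prod>a\<leftarrow>es. [:-a, 1:]) \<noteq> 0"
    using p0 l0 mult_eq_0_iff by blast
  have "order 0 ([:-a, 1:] * (\<Prod>a\<leftarrow>es. [:-a, 1:])) = order 0 [:-a, 1:] + order 0 (\<Prod>a\<leftarrow>es. [:-a, 1:])"
    by (rule order_mult[OF nz])
  moreover have "order 0 [:-a, 1:] = (if a = 0 then 1 else 0)"
  proof (cases "a = 0")
    case True then show ?thesis using order_power_n_n[of 0 1] by simp
  next
    case False
    have "order 0 [:-a, 1:] = 0" by (rule order_0I) (use False in simp)
    then show ?thesis using False by simp
  qed
  ultimately show ?case using Cons by simp
qed

lemma kernel_dim_cong: assumes "mat_kernel X = mat_kernel Y" "dim_col X = dim_col Y"
  shows "kernel_dim X = kernel_dim Y"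
  unfolding kernel_dim_def using assms by simp

lemma T_coeffs:
  fixes C :: "complex mat"
  assumes C: "C \<in> carrier_mat m m"
    and nonneg: "\<And>a v. v \<in> carrier_vec m \<Longrightarrow> v \<noteq> 0\<^sub>v m \<Longrightarrow> C *\<^sub>v v = a \<cdot>\<^sub>v v \<Longrightarrow> 0 \<le> a"
    and sq: "\<And>v. v \<in> carrier_vec m \<Longrightarrow> C *\<^sub>v (C *\<^sub>v v) = 0\<^sub>v m \<Longrightarrow> C *\<^sub>v v = 0\<^sub>v m"
    and i: "i \<le> m"
  shows "coeff (char_poly C) i \<noteq> 0 \<longleftrightarrow> kernel_dim C \<le> i"
proof -
  obtain es where cp: "char_poly C = (\<Prod>a\<leftarrow>es. [:- a, 1:])" and les: "length es = m"
    using char_poly_factorized[OF C] by blast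
  obtain n_as where jnf: "jordan_nf C n_as" using jordan_nf_exists[OF C cp] by blast
  have cm0: "char_matrix C 0 = C" unfolding char_matrix_def using C by (intro eq_matI) auto
  have p1: "C ^\<^sub>m 1 = C" using C by simp
  have p2: "C ^\<^sub>m 2 = C * C" using C by (simp add: numeral_2_eq_2)
  have kerCC: "mat_kernel (C * C) = mat_kernel C"
  proof
    show "mat_kernel (C * C) \<subseteq> mat_kernel C"
      using C sq unfolding mat_kernel_def by (auto simp: assoc_mult_mat_vec[of C m m C m])
    show "mat_kernel C \<subseteq> mat_kernel (C * C)"
      using C unfolding mat_kernel_def by (auto simp: assoc_mult_mat_vec[of C m m C m])
  qed
  have k1: "dim_gen_eigenspace C 0 1 = kernel_dim C"
    unfolding dim_gen_eigenspace_def cm0 p1 ..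
  have k2: "dim_gen_eigenspace C 0 2 = kernel_dim C"
    unfolding dim_gen_eigenspace_def cm0 p2 by (rule kernel_dim_cong[OF kerCC]) (use C in simp)
  let ?L = "map fst [(n, e)\<leftarrow>n_as . e = 0]"
  have s1: "sum_list (map (min 1) ?L) = kernel_dim C"
    using dim_gen_eigenspace[OF jnf, of 0 1] k1 by simp
  have s2: "sum_list (map (min 2) ?L) = kernel_dim C"
    using dim_gen_eigenspace[OF jnf, of 0 2] k2 by simp
  have "sum_list ?L = kernel_dim C" using min12[of ?L] s1 s2 by simp
  moreover have "[(n, e)\<leftarrow>n_as . e = 0] = filter (\<lambda>na. snd na = 0) n_as"
    by (induct n_as) auto
  ultimately have "order 0 (char_poly C) = kernel_dim C" using jordan_nf_order[OF jnf, of 0] by simp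
  then have z: "length (filter (\<lambda>a. a = 0) es) = kernel_dim C" unfolding cp order_prod_list .
  have nn: "\<forall>a\<in>set es. 0 \<le> a"
  proof
    fix a assume "a \<in> set es"
    then have "poly (char_poly C) a = 0" unfolding cp poly_prod_list by (auto simp: prod_list_zero_iff)
    then have "eigenvalue C a" using eigenvalue_root_char_poly[OF C] by simp
    then obtain v where "v \<in> carrier_vec m" "v \<noteq> 0\<^sub>v m" "C *\<^sub>v v = a \<cdot>\<^sub>v v"
      unfolding eigenvalue_def eigenvector_def using C by auto
    then show "0 \<le> a" by (rule nonneg)
  qed
  note sl = sign_lemma[OF nn]
  show ?thesis
  proof
    assume "coeff (char_poly C) i \<noteq> 0"
    then show "kernel_dim C \<le> i" using sl z unfolding cp by (metis not_le)
  next
    assume "kernel_dim C \<le> i"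
    then have "0 < (-1) ^ (length es - i) * Re (coeff (char_poly C) i)"
      using sl z i les unfolding cp by auto
    then show "coeff (char_poly C) i \<noteq> 0" by auto
  qed
qed

context cb begin

lemma key:
  assumes M: "M \<in> clif n"
  defines "T \<equiv> cl_mult p q (cl_dagger p q M) M"
  defines "r \<equiv> cl_rank p q \<beta> M"
  shows "r \<le> NN" "char_coeff p q M NN \<noteq> 0 \<longleftrightarrow> r = NN"
    "\<And>j. 1 \<le> j \<Longrightarrow> j \<le> NN \<Longrightarrow> char_coeff p q T j \<noteq> 0 \<longleftrightarrow> j \<le> r"
    "M \<noteq> 0 \<Longrightarrow> 1 \<le> r" "M = 0 \<Longrightarrow> r = 0"
proof -
  have NN1: "1 \<le> NN" using NN_even by simp
  have zv: "\<And>v. v \<in> carrier_vec NN \<Longrightarrow> (0::complex) \<cdot>\<^sub>v v = 0\<^sub>v NN" by auto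
  have A: "AA M \<in> carrier_mat NN NN" by (rule b_carrier[OF M])
  have T: "T \<in> clif n" unfolding T_def by (rule cl_mult_clif)
  have CT: "\<beta> T = GG M * AA M" unfolding T_def using CC_beta[OF M] by simp
  have C: "GG M * AA M \<in> carrier_mat NN NN" using CC_t[OF M] beta_target_carrier by auto
  have rdef: "r = vec_space.rank NN (AA M)" unfolding r_def cl_rank_def ..
  have rn: "r + kernel_dim (AA M) = NN" unfolding rdef by (rule rank_nullity_mat[OF A])
  show rle: "r \<le> NN" using rn by simp
  have "char_coeff p q M NN = - coeff (char_poly (AA M)) 0"
    using char_coeff_matrix[OF M NN1 le_refl] by simp
  also have "coeff (char_poly (AA M)) 0 = poly (char_poly (AA M)) 0" by (simp add: poly_0_coeff_0)
  finally have cN: "char_coeff p q M NN = - poly (char_poly (AA M)) 0" .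
  have "poly (char_poly (AA M)) 0 = 0 \<longleftrightarrow> eigenvalue (AA M) 0"
    using eigenvalue_root_char_poly[OF A] by simp
  also have "\<dots> \<longleftrightarrow> (\<exists>v. v \<in> carrier_vec NN \<and> v \<noteq> 0\<^sub>v NN \<and> AA M *\<^sub>v v = 0\<^sub>v NN)"
    unfolding eigenvalue_def eigenvector_def using A zv by auto
  also have "\<dots> \<longleftrightarrow> det (AA M) = 0" using det_0_iff_vec_prod_zero_field[OF A] by simp
  also have "\<dots> \<longleftrightarrow> r \<noteq> NN" unfolding rdef using vec_space.det_rank_iff[OF A] by blast
  finally show "char_coeff p q M NN \<noteq> 0 \<longleftrightarrow> r = NN" unfolding cN by auto
  have kerC: "mat_kernel (GG M * AA M) = mat_kernel (AA M)"
  proof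
    show "mat_kernel (GG M * AA M) \<subseteq> mat_kernel (AA M)"
      using K1[OF M] C A unfolding mat_kernel_def by auto
    have G: "GG M \<in> carrier_mat NN NN" using GG_t[OF M] beta_target_carrier by auto
    show "mat_kernel (AA M) \<subseteq> mat_kernel (GG M * AA M)"
      using C A G unfolding mat_kernel_def
      by (auto simp: assoc_mult_mat_vec[OF G A])
  qed
  have kd: "kernel_dim (GG M * AA M) = NN - r"
    using kernel_dim_cong[OF kerC] C A rn by simp
  have j3: "char_coeff p q T j \<noteq> 0 \<longleftrightarrow> j \<le> r" if j: "1 \<le> j" "j \<le> NN" for j
  proof -
  have "char_coeff p q T j = - coeff (char_poly (\<beta> T)) (NN - j)"
    by (rule char_coeff_matrix[OF T j])
  then have "char_coeff p q T j \<noteq> 0 \<longleftrightarrow> coeff (char_poly (GG M * AA M)) (NN - j) \<noteq> 0"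
    unfolding CT by simp
  also have "\<dots> \<longleftrightarrow> kernel_dim (GG M * AA M) \<le> NN - j"
    by (rule T_coeffs[OF C]) (use E_nonneg[OF M] K2[OF M] in auto)
  also have "\<dots> \<longleftrightarrow> j \<le> r" unfolding kd using j rle by auto
  finally show "char_coeff p q T j \<noteq> 0 \<longleftrightarrow> j \<le> r" .
  qed
  then show "\<And>j. 1 \<le> j \<Longrightarrow> j \<le> NN \<Longrightarrow> char_coeff p q T j \<noteq> 0 \<longleftrightarrow> j \<le> r" by blast
  show "M \<noteq> 0 \<Longrightarrow> 1 \<le> r"
  proof -
  assume M0: "M \<noteq> 0"
  have "char_coeff p q T 1 = of_nat NN * scalar_part T"
    unfolding char_coeff_def by simp
  also have "scalar_part T = ip M M" unfolding T_def by (rule scalar_dagger[OF M])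
  finally have "char_coeff p q T 1 \<noteq> 0" using ip_eq0[OF M] M0 NN1 by auto
  then show "1 \<le> r" using j3[of 1] NN1 by simp
  qed
  assume "M = 0"
  then have "\<beta> M = 0\<^sub>m NN NN" using b_zero by simp
  then show "r = 0" unfolding r_def cl_rank_def using vec_space.rank_0I by metis
qed

end

theorem theorem4:
  fixes p q :: nat and M :: cl and \<beta> :: "cl \<Rightarrow> complex mat"
  assumes "p + q \<ge> 1"
    and "M \<in> clif (p+q)"
    and "is_beta p q \<beta>"
  defines "N \<equiv> clif_N (p+q)"
    and "T \<equiv> cl_mult p q (cl_dagger p q M) M"
  shows "(char_coeff p q M N \<noteq> 0 \<longrightarrow> cl_rank p q \<beta> M = N)
    \<and> (\<forall>k\<in>{2..N-1}. char_coeff p q M N = 0 \<and> (\<forall>j\<in>{k+1..N-1}. char_coeff p q T j = 0)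
          \<and> char_coeff p q T k \<noteq> 0 \<longrightarrow> cl_rank p q \<beta> M = k)
    \<and> (char_coeff p q M N = 0 \<and> (\<forall>j\<in>{2..N-1}. char_coeff p q T j = 0) \<and> M \<noteq> 0
          \<longrightarrow> cl_rank p q \<beta> M = 1)
    \<and> (M = 0 \<longrightarrow> cl_rank p q \<beta> M = 0)"
proof -
  interpret cb p q \<beta> by (unfold_locales) (use assms(1,3) in auto)
  define r where "r = cl_rank p q \<beta> M"
  have rle: "r \<le> N" using key(1)[OF assms(2)] unfolding r_def N_def .
  have cN: "char_coeff p q M N \<noteq> 0 \<longleftrightarrow> r = N" using key(2)[OF assms(2)] unfolding r_def N_def .
  have cT: "char_coeff p q T j \<noteq> 0 \<longleftrightarrow> j \<le> r" if "1 \<le> j" "j \<le> N" for j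
    using key(3)[OF assms(2) that[unfolded N_def]] unfolding r_def N_def T_def .
  have r1: "M \<noteq> 0 \<Longrightarrow> 1 \<le> r" using key(4)[OF assms(2)] unfolding r_def .
  have r0: "M = 0 \<Longrightarrow> r = 0" using key(5)[OF assms(2)] unfolding r_def .
  have part2: "cl_rank p q \<beta> M = k"
    if k: "k \<in> {2..N-1}" and h1: "char_coeff p q M N = 0" and h2: "\<forall>j\<in>{k+1..N-1}. char_coeff p q T j = 0"
      and h3: "char_coeff p q T k \<noteq> 0" for k
  proof -
    have rN: "r \<le> N - 1" using cN h1 rle by auto
    have kr: "k \<le> r" using cT[of k] k h3 by auto
    have "\<not> k < r"
    proof
      assume "k < r"
      then have "r \<in> {k+1..N-1}" using rN by auto
      then have "char_coeff p q T r = 0" using h2 by blast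
      moreover have "char_coeff p q T r \<noteq> 0" using cT[of r] \<open>k < r\<close> rle by auto
      ultimately show False by simp
    qed
    then show ?thesis using kr unfolding r_def by simp
  qed
  have part3: "cl_rank p q \<beta> M = 1"
    if h1: "char_coeff p q M N = 0" and h2: "\<forall>j\<in>{2..N-1}. char_coeff p q T j = 0" and M0: "M \<noteq> 0"
  proof -
    have rN: "r \<le> N - 1" using cN h1 rle by auto
    have kr: "1 \<le> r" using r1 M0 by simp
    have "\<not> 1 < r"
    proof
      assume "1 < r"
      then have "r \<in> {2..N-1}" using rN by auto
      then have "char_coeff p q T r = 0" using h2 by blast
      moreover have "char_coeff p q T r \<noteq> 0" using cT[of r] \<open>1 < r\<close> rle by auto
      ultimately show False by simp
    qed
    then show ?thesis using kr unfolding r_def by simp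
  qed
  show ?thesis using cN part2 part3 r0 unfolding r_def by blast
qed

end
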